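(* Let $X$ be a finite set with $|X|\ge 3$, let $C_i\in\mathcal C_X$, and let $w\in S(X)$ with $w\lessdot C_i$. Then: (i) $w$ is covered by exactly three elements of $S(X)$ if and only if $w$ is obtained from $C_i$ by contracting an internal edge $\alpha$ of $C_i$, and in that case these three elements (all in $\mathcal C_X$, one being $C_i$) are pairwise related by a nearest neighbor interchange over $\alpha$; (ii) $w$ is covered by $C_i$ only if and only if $w$ is obtained from $C_i$ by contracting a leaf edge of $C_i$.
   Context: An $X$-tree is a pair $(T,\phi)$ with $T$ a finite tree and $\phi:X\to V(T)$ a map such that every vertex not in $\phi(X)$ has degree at least $3$; a vertex is labeled if it lies in $\phi(X)$. An $X$-forest is a set $\{(A,\mathcal T_A):A\in\pi\}$ where $\pi$ is a set partition of $X$ and each $\mathcal T_A$ is an $A$-tree. Contracting an edge $e=(u,v)$ removes $e$ and identifies $u,v$, the new vertex carrying the union of the labels of $u$ and $v$. Deleting $e$ removes $e$ without changing vertices; the deletion is safe if each of $u$ and $v$ is labeled or has degree greater than $3$. The Tuffley poset $S(X)$ is the set of $X$-forests ordered by $\mathcal F'\le\mathcal F$ iff $\mathcal F'$ is obtained from $\mathcal F$ by a sequence of contractions and safe deletions; $\mathcal F'\lessdot \mathcal F$ iff $\mathcal F'$ is obtained by a single contraction or safe deletion. $\mathcal C_X$ denotes the set of maximal elements of $S(X)$: trees whose leaves are labeled bijectively by $X$ and whose internal vertices are unlabeled of degree $3$. An internal edge is an edge both of whose endpoints are internal vertices; a leaf edge is one incident to a leaf. Nearest neighbor interchange (NNI):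 for $C\in\mathcal C_X$ and an internal edge $\alpha=(u,v)$, the edge $\alpha$ separates subtrees $A,B$ attached at $u$ from subtrees $C',D$ attached at $v$. Swapping $B$ with $C'$, or swapping $B$ with $D$, yields a new tree in $\mathcal C_X$; obtaining either of these from $C$ is an NNI over $\alpha$. *)

theory Defs
  imports Main
begin

text \<open>Finite graphs with vertices in nat, simple undirected edges (2-element sets),
and a labelling map phi. Only the values of lab on X matter.\<close>

record 'x xgraph =
  verts :: "nat set"
  edges :: "nat set set"
  lab   :: "'x \<Rightarrow> nat"

definition wf_graph :: "'x xgraph \<Rightarrow> bool" where
  "wf_graph G \<longleftrightarrow> finite (verts G) \<and> (\<forall>e\<in>edges G. e \<subseteq> verts G \<and> card e = 2)"

definition deg :: "'x xgraph \<Rightarrow> nat \<Rightarrow> nat" where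
  "deg G v = card {e \<in> edges G. v \<in> e}"

definition adjrel :: "'x xgraph \<Rightarrow> (nat \<times> nat) set" where
  "adjrel G = {(u, v). {u, v} \<in> edges G}"

definition connected_graph :: "'x xgraph \<Rightarrow> bool" where
  "connected_graph G \<longleftrightarrow> (\<forall>u\<in>verts G. \<forall>v\<in>verts G. (u, v) \<in> (adjrel G)\<^sup>*)"

definition acyclic_graph :: "'x xgraph \<Rightarrow> bool" where
  "acyclic_graph G \<longleftrightarrow> \<not> (\<exists>vs. length vs \<ge> 3 \<and> distinct vs \<and> set vs \<subseteq> verts G \<and>
      (\<forall>i < length vs. {vs ! i, vs ! ((i + 1) mod length vs)} \<in> edges G))"

definition is_tree :: "'x xgraph \<Rightarrow> bool" where
  "is_tree G \<longleftrightarrow> wf_graph G \<and> verts G \<noteq> {} \<and> connected_graph G \<and> acyclic_graph G"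

definition labeled :: "'x set \<Rightarrow> 'x xgraph \<Rightarrow> nat \<Rightarrow> bool" where
  "labeled A G v \<longleftrightarrow> v \<in> lab G ` A"

definition is_xtree :: "'x set \<Rightarrow> 'x xgraph \<Rightarrow> bool" where
  "is_xtree A T \<longleftrightarrow> is_tree T \<and> lab T ` A \<subseteq> verts T \<and>
     (\<forall>v\<in>verts T. \<not> labeled A T v \<longrightarrow> deg T v \<ge> 3)"

definition components :: "'x xgraph \<Rightarrow> nat set set" where
  "components G = verts G // {(u, v). u \<in> verts G \<and> v \<in> verts G \<and> (u, v) \<in> (adjrel G)\<^sup>*}"

definition induced :: "'x xgraph \<Rightarrow> nat set \<Rightarrow> 'x xgraph" where
  "induced G K = \<lparr>verts = K, edges = {e \<in> edges G. e \<subseteq> K}, lab = lab G\<rparr>"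

text \<open>An X-forest, represented as the disjoint union of its trees: each connected
component K is an A-tree for the (nonempty) block A of labels placed in K; these
blocks form the partition pi of X.\<close>
definition is_xforest :: "'x set \<Rightarrow> 'x xgraph \<Rightarrow> bool" where
  "is_xforest X F \<longleftrightarrow> wf_graph F \<and> lab F ` X \<subseteq> verts F \<and>
     (\<forall>K\<in>components F. {x \<in> X. lab F x \<in> K} \<noteq> {} \<and>
         is_xtree {x \<in> X. lab F x \<in> K} (induced F K))"

text \<open>Isomorphism of X-forests (elements of S(X) are isomorphism classes).\<close>
definition xiso :: "'x set \<Rightarrow> 'x xgraph \<Rightarrow> 'x xgraph \<Rightarrow> bool" where
  "xiso X F G \<longleftrightarrow> (\<exists>f. bij_betw f (verts F) (verts G) \<and>
     (\<forall>a\<in>verts F. \<forall>b\<in>verts F. {a, b} \<in> edges F \<longleftrightarrow> {f a, f b} \<in> edges G) \<and>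
     (\<forall>x\<in>X. lab G x = f (lab F x)))"

definition contract :: "'x xgraph \<Rightarrow> nat \<Rightarrow> nat \<Rightarrow> 'x xgraph" where
  "contract G u v =
     (let m = (\<lambda>x. if x = v then u else x) in
      \<lparr>verts = verts G - {v}, edges = (\<lambda>e. m ` e) ` (edges G - {{u, v}}), lab = m \<circ> lab G\<rparr>)"

definition delete :: "'x xgraph \<Rightarrow> nat \<Rightarrow> nat \<Rightarrow> 'x xgraph" where
  "delete G u v = G\<lparr>edges := edges G - {{u, v}}\<rparr>"

definition safe_deletion :: "'x set \<Rightarrow> 'x xgraph \<Rightarrow> nat \<Rightarrow> nat \<Rightarrow> bool" where
  "safe_deletion X G u v \<longleftrightarrow> (labeled X G u \<or> deg G u > 3) \<and> (labeled X G v \<or> deg G v > 3)"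

definition one_step :: "'x set \<Rightarrow> 'x xgraph \<Rightarrow> 'x xgraph \<Rightarrow> bool" where
  "one_step X F G \<longleftrightarrow> (\<exists>u v. u \<noteq> v \<and> {u, v} \<in> edges F \<and>
      (G = contract F u v \<or> (safe_deletion X F u v \<and> G = delete F u v)))"

definition covers :: "'x set \<Rightarrow> 'x xgraph \<Rightarrow> 'x xgraph \<Rightarrow> bool" where
  "covers X w F \<longleftrightarrow> is_xforest X w \<and> is_xforest X F \<and> (\<exists>G. one_step X F G \<and> xiso X w G)"

definition cover_classes :: "'x set \<Rightarrow> 'x xgraph \<Rightarrow> 'x xgraph set set" where
  "cover_classes X w = {F. covers X w F} // {(F, G). xiso X F G}"

definition leaves :: "'x xgraph \<Rightarrow> nat set" where
  "leaves G = {v \<in> verts G. deg G v = 1}"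

definition in_CX :: "'x set \<Rightarrow> 'x xgraph \<Rightarrow> bool" where
  "in_CX X C \<longleftrightarrow> is_xtree X C \<and> bij_betw (lab C) X (leaves C) \<and>
     (\<forall>v\<in>verts C - leaves C. \<not> labeled X C v \<and> deg C v = 3)"

definition internal_edge :: "'x xgraph \<Rightarrow> nat \<Rightarrow> nat \<Rightarrow> bool" where
  "internal_edge G u v \<longleftrightarrow> u \<noteq> v \<and> {u, v} \<in> edges G \<and> u \<notin> leaves G \<and> v \<notin> leaves G"

definition leaf_edge :: "'x xgraph \<Rightarrow> nat \<Rightarrow> nat \<Rightarrow> bool" where
  "leaf_edge G u v \<longleftrightarrow> u \<noteq> v \<and> {u, v} \<in> edges G \<and> (u \<in> leaves G \<or> v \<in> leaves G)"

definition nni_swap :: "'x xgraph \<Rightarrow> nat \<Rightarrow> nat \<Rightarrow> nat \<Rightarrow> nat \<Rightarrow> 'x xgraph" where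
  "nni_swap G u b v c = G\<lparr>edges := (edges G - {{u, b}, {v, c}}) \<union> {{u, c}, {v, b}}\<rparr>"

definition is_nni :: "'x set \<Rightarrow> 'x xgraph \<Rightarrow> nat \<Rightarrow> nat \<Rightarrow> 'x xgraph \<Rightarrow> bool" where
  "is_nni X F u v G \<longleftrightarrow> internal_edge F u v \<and>
     (\<exists>b c. {u, b} \<in> edges F \<and> b \<noteq> v \<and> {v, c} \<in> edges F \<and> c \<noteq> u \<and>
            xiso X G (nni_swap F u b v c))"

end

theory Submission
  imports Defs
begin

definition nbrs :: "'x xgraph \<Rightarrow> nat \<Rightarrow> nat set" where
  "nbrs G t = {s. {t, s} \<in> edges G}"

definition labels :: "'x set \<Rightarrow> 'x xgraph \<Rightarrow> nat \<Rightarrow> 'x set" where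
  "labels X G t = {x \<in> X. lab G x = t}"

definition walk :: "nat set set \<Rightarrow> nat list \<Rightarrow> bool" where
  "walk E ps \<longleftrightarrow> (\<forall>i. Suc i < length ps \<longrightarrow> {ps!i, ps!Suc i} \<in> E)"

definition adj :: "nat set set \<Rightarrow> (nat \<times> nat) set" where
  "adj E = {(u,v). {u,v} \<in> E}"

lemma adjrel_eq: "adjrel G = adj (edges G)" by (simp add: adjrel_def adj_def)

lemma adj_iff[simp]: "(u,v) \<in> adj E \<longleftrightarrow> {u,v} \<in> E" by (simp add: adj_def)

lemma adj_sym: "(u,v) \<in> (adj E)\<^sup>* \<Longrightarrow> (v,u) \<in> (adj E)\<^sup>*"
proof (induction rule: rtrancl_induct)
  case base then show ?case by simp
next
  case (step y z)
  have "(z,y) \<in> adj E" using step(2) by (simp add: insert_commute)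
  then show ?case using step(3) by (meson converse_rtrancl_into_rtrancl)
qed

lemma adj_mono: "E \<subseteq> E' \<Longrightarrow> (u,v) \<in> (adj E)\<^sup>* \<Longrightarrow> (u,v) \<in> (adj E')\<^sup>*"
  by (erule rtrancl_mono[THEN subsetD, rotated]) (auto simp: adj_def)

lemma wf_edge: "wf_graph G \<Longrightarrow> e \<in> edges G \<Longrightarrow> \<exists>x y. e = {x,y} \<and> x \<noteq> y \<and> x \<in> verts G \<and> y \<in> verts G"
  unfolding wf_graph_def by (metis card_2_iff insert_subset)

lemma wf_edge2: "wf_graph G \<Longrightarrow> {x,y} \<in> edges G \<Longrightarrow> x \<noteq> y \<and> x \<in> verts G \<and> y \<in> verts G"
  unfolding wf_graph_def by (metis card_2_iff doubleton_eq_iff insert_subset)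

lemma nbrs_verts: "wf_graph G \<Longrightarrow> nbrs G t \<subseteq> verts G"
  unfolding nbrs_def using wf_edge2 by blast

lemma nbrs_finite: "wf_graph G \<Longrightarrow> finite (nbrs G t)"
  using nbrs_verts wf_graph_def finite_subset by metis

lemma nbrs_iff: "s \<in> nbrs G t \<longleftrightarrow> {t,s} \<in> edges G" by (simp add: nbrs_def)

lemma deg_nbrs: assumes "wf_graph G" shows "deg G t = card (nbrs G t)"
proof -
  have eq: "{e \<in> edges G. t \<in> e} = (\<lambda>s. {t,s}) ` nbrs G t"
  proof
    show "{e \<in> edges G. t \<in> e} \<subseteq> (\<lambda>s. {t,s}) ` nbrs G t"
    proof
      fix e assume "e \<in> {e \<in> edges G. t \<in> e}"
      then obtain x y where e: "e = {x,y}" "e \<in> edges G" "t \<in> e" using wf_edge[OF assms] by blast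
      then show "e \<in> (\<lambda>s. {t,s}) ` nbrs G t"
        by (auto simp: nbrs_def insert_commute)
    qed
  qed (auto simp: nbrs_def)
  have inj: "inj_on (\<lambda>s. {t,s}) (nbrs G t)"
  proof
    fix s s' assume "s \<in> nbrs G t" "s' \<in> nbrs G t" "{t,s} = {t,s'}"
    then show "s = s'" using wf_edge2[OF assms] by (auto simp: nbrs_def doubleton_eq_iff)
  qed
  show ?thesis unfolding deg_def eq card_image[OF inj] ..
qed

definition nocommon :: "'x xgraph \<Rightarrow> nat \<Rightarrow> nat \<Rightarrow> bool" where
  "nocommon G u v \<longleftrightarrow> (\<forall>t. \<not> ({u,t} \<in> edges G \<and> {v,t} \<in> edges G))"

lemma contract_simps:
  "verts (contract G u v) = verts G - {v}"
  "lab (contract G u v) = (\<lambda>x. if x = v then u else x) \<circ> lab G"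
  "edges (contract G u v) = (\<lambda>e. (\<lambda>x. if x = v then u else x) ` e) ` (edges G - {{u,v}})"
  by (simp_all add: contract_def Let_def)

lemma img_fix: "u \<notin> (\<lambda>x. if x = v then u else (x::nat)) ` e \<Longrightarrow> (\<lambda>x. if x = v then u else x) ` e = e"
proof -
  assume h: "u \<notin> (\<lambda>x. if x = v then u else (x::nat)) ` e"
  have "\<forall>x\<in>e. x \<noteq> v"
  proof
    fix x assume "x \<in> e" show "x \<noteq> v"
    proof
      assume "x = v" then have "u \<in> (\<lambda>x. if x = v then u else (x::nat)) ` e" using \<open>x \<in> e\<close> by force
      then show False using h by blast
    qed
  qed
  then show ?thesis by (simp cong: image_cong)
qed

lemma img_pair: "(\<lambda>x. if x = v then u else (x::nat)) ` {p,q} = {if p = v then u else p, if q = v then u else q}"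
  by simp

lemma contract_c1:
  assumes wf: "wf_graph G" and x: "x \<notin> {u,v}" and y: "y \<notin> {u,v}"
  shows "{x,y} \<in> edges (contract G u v) \<longleftrightarrow> {x,y} \<in> edges G"
proof
  assume "{x,y} \<in> edges G"
  moreover have "(\<lambda>x. if x = v then u else x) ` {x,y} = {x,y}" using x y by auto
  moreover have "{x,y} \<noteq> {u,v}" using x by auto
  ultimately show "{x,y} \<in> edges (contract G u v)" unfolding contract_simps
    by (intro image_eqI[where x="{x,y}"]) auto
next
  assume "{x,y} \<in> edges (contract G u v)"
  then obtain e where e: "e \<in> edges G" "{x,y} = (\<lambda>x. if x = v then u else x) ` e"
    unfolding contract_simps by blast
  have "u \<notin> {x,y}" using x y by auto
  then have "(\<lambda>x. if x = v then u else x) ` e = e" using img_fix e(2) by metis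
  with e show "{x,y} \<in> edges G" by simp
qed

lemma contract_c2:
  assumes wf: "wf_graph G" and y: "y \<notin> {u,v}"
  shows "{u,y} \<in> edges (contract G u v) \<longleftrightarrow> ({u,y} \<in> edges G \<or> {v,y} \<in> edges G)"
proof
  assume "{u,y} \<in> edges G \<or> {v,y} \<in> edges G"
  then obtain e where e: "e \<in> edges G" "e = {u,y} \<or> e = {v,y}" by blast
  moreover have "(\<lambda>x. if x = v then u else x) ` e = {u,y}" using e(2) y by auto
  moreover have "e \<noteq> {u,v}" using e(2) y by (auto simp: doubleton_eq_iff)
  ultimately show "{u,y} \<in> edges (contract G u v)" unfolding contract_simps
    by (intro image_eqI[where x=e]) auto
next
  assume "{u,y} \<in> edges (contract G u v)"
  then obtain e where e: "e \<in> edges G" "{u,y} = (\<lambda>x. if x = v then u else x) ` e"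
    unfolding contract_simps by blast
  then obtain p q where pq: "e = {p,q}" using wf_edge[OF wf] by blast
  have eq: "{u,y} = {if p = v then u else p, if q = v then u else q}" using e(2) pq by (simp only: img_pair)
  have yi: "y \<in> {if p = v then u else p, if q = v then u else q}" unfolding eq[symmetric] by simp
  have ui: "u \<in> {if p = v then u else p, if q = v then u else q}" unfolding eq[symmetric] by simp
  show "{u,y} \<in> edges G \<or> {v,y} \<in> edges G"
  proof (cases "(if p = v then u else p) = y")
    case True
    then have p: "p = y" using y by (auto split: if_splits)
    then have "(if q = v then u else q) = u" using ui y by auto
    then have "q = u \<or> q = v" by (auto split: if_splits)
    then show ?thesis using e(1) pq p by (auto simp: insert_commute)
  next
    case False
    then have qy: "(if q = v then u else q) = y" using yi by auto
    then have q: "q = y" using y by (auto split: if_splits)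
    have "(if p = v then u else p) = u" using ui y q qy False by auto
    then have "p = u \<or> p = v" by (auto split: if_splits)
    then show ?thesis using e(1) pq q by auto
  qed
qed

lemma card_minus1: "finite N \<Longrightarrow> v \<in> N \<Longrightarrow> card (N - {v}) + 1 = card N"
  by (metis One_nat_def Suc_pred add.right_neutral add_Suc_right card_Diff_singleton card_gt_0_iff empty_iff)

lemma contract_nov: "u \<noteq> v \<Longrightarrow> e \<in> edges (contract G u v) \<Longrightarrow> v \<notin> e"
  unfolding contract_simps by auto

lemma contract_wf:
  assumes wf: "wf_graph G" and uv: "{u,v} \<in> edges G"
  shows "wf_graph (contract G u v)"
proof -
  have uv': "u \<noteq> v" "u \<in> verts G" "v \<in> verts G" using wf_edge2[OF wf uv] by auto
  have "e' \<subseteq> verts G - {v} \<and> card e' = 2" if h: "e' \<in> edges (contract G u v)" for e'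
  proof -
    obtain e where e: "e \<in> edges G" "e \<noteq> {u,v}" "e' = (\<lambda>x. if x = v then u else x) ` e"
      using h unfolding contract_simps by blast
    obtain p q where pq: "e = {p,q}" "p \<noteq> q" "p \<in> verts G" "q \<in> verts G" using wf_edge[OF wf e(1)] by blast
    have "e' = {if p = v then u else p, if q = v then u else q}" using e(3) pq by auto
    moreover have "(if p = v then u else p) \<noteq> (if q = v then u else q)"
      using pq e(2) uv' by (auto simp: doubleton_eq_iff)
    ultimately show ?thesis using pq uv' by auto
  qed
  then show ?thesis using wf unfolding wf_graph_def contract_simps by auto
qed

lemma nocommon_sym: "nocommon G u v = nocommon G v u"
  unfolding nocommon_def by blast

lemma contract_nbrs_u:
  assumes wf: "wf_graph G" and uv: "{u,v} \<in> edges G"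
  shows "nbrs (contract G u v) u = (nbrs G u \<union> nbrs G v) - {u,v}"
proof -
  have uv': "u \<noteq> v" using wf_edge2[OF wf uv] by auto
  show ?thesis
  proof (rule set_eqI)
    fix y
    show "y \<in> nbrs (contract G u v) u \<longleftrightarrow> y \<in> (nbrs G u \<union> nbrs G v) - {u,v}"
    proof (cases "y \<in> {u,v}")
      case True
      have "{u,y} \<notin> edges (contract G u v)"
      proof
        assume h: "{u,y} \<in> edges (contract G u v)"
        have "wf_graph (contract G u v)" using contract_wf[OF wf uv] .
        then have "u \<noteq> y" using wf_edge2 h by blast
        then have "y = v" using True by auto
        then show False using contract_nov[OF uv' h] by auto
      qed
      then show ?thesis using True by (simp add: nbrs_iff)
    next
      case False
      then show ?thesis using contract_c2[OF wf False] by (auto simp: nbrs_iff)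
    qed
  qed
qed

lemma contract_nbrs_t:
  assumes wf: "wf_graph G" and uv: "{u,v} \<in> edges G" and t: "t \<notin> {u,v}"
  shows "nbrs (contract G u v) t = (nbrs G t - {v}) \<union> (if v \<in> nbrs G t then {u} else {})"
proof -
  have uv': "u \<noteq> v" using wf_edge2[OF wf uv] by auto
  show ?thesis
  proof (rule set_eqI)
    fix y
    show "y \<in> nbrs (contract G u v) t \<longleftrightarrow> y \<in> (nbrs G t - {v}) \<union> (if v \<in> nbrs G t then {u} else {})"
    proof (cases "y = v")
      case True
      then show ?thesis using contract_nov[OF uv', of _ G] uv' by (auto simp: nbrs_iff)
    next
      case yv: False
      show ?thesis
      proof (cases "y = u")
        case True
        then show ?thesis using contract_c2[OF wf t] uv' by (auto simp: nbrs_iff insert_commute)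
      next
        case False
        then show ?thesis using contract_c1[OF wf t, of y] yv by (auto simp: nbrs_iff)
      qed
    qed
  qed
qed

lemma contract_deg_t:
  assumes wf: "wf_graph G" and uv: "{u,v} \<in> edges G" and t: "t \<notin> {u,v}" and nc: "nocommon G u v"
  shows "deg (contract G u v) t = deg G t"
proof -
  have wf': "wf_graph (contract G u v)" by (rule contract_wf[OF wf uv])
  have fin: "finite (nbrs G t)" using nbrs_finite[OF wf] .
  show ?thesis
  proof (cases "v \<in> nbrs G t")
    case True
    then have "u \<notin> nbrs G t" using nc by (auto simp: nocommon_def nbrs_iff insert_commute)
    then have "card ((nbrs G t - {v}) \<union> {u}) = card (nbrs G t)"
      using True fin card_minus1[OF fin True] by (simp add: card_insert_disjoint)
    then show ?thesis using True by (simp add: deg_nbrs[OF wf] deg_nbrs[OF wf'] contract_nbrs_t[OF wf uv t])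
  next
    case False
    then show ?thesis by (simp add: deg_nbrs[OF wf] deg_nbrs[OF wf'] contract_nbrs_t[OF wf uv t])
  qed
qed

lemma contract_deg_u:
  assumes wf: "wf_graph G" and uv: "{u,v} \<in> edges G" and nc: "nocommon G u v"
  shows "deg (contract G u v) u + 2 = deg G u + deg G v"
proof -
  have wf': "wf_graph (contract G u v)" by (rule contract_wf[OF wf uv])
  have uv': "u \<noteq> v" using wf_edge2[OF wf uv] by auto
  have fu: "finite (nbrs G u)" and fv: "finite (nbrs G v)" using nbrs_finite[OF wf] by auto
  have vu: "v \<in> nbrs G u" "u \<in> nbrs G v" using uv by (auto simp: nbrs_iff insert_commute)
  have uu: "u \<notin> nbrs G u" "v \<notin> nbrs G v" using wf_edge2[OF wf, of u u] wf_edge2[OF wf, of v v] by (auto simp: nbrs_iff)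
  have disj: "nbrs G u \<inter> nbrs G v = {}" using nc by (auto simp: nocommon_def nbrs_iff)
  have "(nbrs G u \<union> nbrs G v) - {u,v} = (nbrs G u - {v}) \<union> (nbrs G v - {u})"
    using uu by auto
  moreover have "card ((nbrs G u - {v}) \<union> (nbrs G v - {u})) = card (nbrs G u - {v}) + card (nbrs G v - {u})"
    by (rule card_Un_disjoint) (use fu fv disj in auto)
  moreover have "card (nbrs G u - {v}) + 1 = card (nbrs G u)" "card (nbrs G v - {u}) + 1 = card (nbrs G v)"
    using card_minus1[OF fu vu(1)] card_minus1[OF fv vu(2)] by auto
  ultimately show ?thesis
    by (simp add: deg_nbrs[OF wf] deg_nbrs[OF wf'] contract_nbrs_u[OF wf uv])
qed

lemma contract_labels_t:
  "t \<noteq> u \<Longrightarrow> t \<noteq> v \<Longrightarrow> labels X (contract G u v) t = labels X G t"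
  by (auto simp: labels_def contract_simps)

lemma contract_labels_u:
  "labels X (contract G u v) u = labels X G u \<union> labels X G v"
  by (auto simp: labels_def contract_simps)

definition isom :: "'x set \<Rightarrow> 'x xgraph \<Rightarrow> 'x xgraph \<Rightarrow> (nat \<Rightarrow> nat) \<Rightarrow> bool" where
  "isom X F G f \<longleftrightarrow> bij_betw f (verts F) (verts G) \<and>
     (\<forall>a\<in>verts F. \<forall>b\<in>verts F. {a, b} \<in> edges F \<longleftrightarrow> {f a, f b} \<in> edges G) \<and>
     (\<forall>x\<in>X. lab G x = f (lab F x))"

lemma xiso_isom: "xiso X F G \<longleftrightarrow> (\<exists>f. isom X F G f)"
  by (simp add: xiso_def isom_def)

lemma xiso_refl: "xiso X G G"
  unfolding xiso_isom isom_def by (rule exI[of _ id]) auto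

lemma isom_sym:
  assumes iso: "isom X F G f" and lv: "lab F ` X \<subseteq> verts F"
  shows "isom X G F (inv_into (verts F) f)"
proof -
  let ?g = "inv_into (verts F) f"
  have bij: "bij_betw f (verts F) (verts G)" using iso by (simp add: isom_def)
  have bij': "bij_betw ?g (verts G) (verts F)" by (rule bij_betw_inv_into[OF bij])
  have fg: "f (?g a) = a" if "a \<in> verts G" for a
    using that bij by (metis bij_betw_imp_surj_on f_inv_into_f)
  have gv: "?g a \<in> verts F" if "a \<in> verts G" for a using that bij' bij_betwE by blast
  have e: "{a,b} \<in> edges G \<longleftrightarrow> {?g a, ?g b} \<in> edges F" if "a \<in> verts G" "b \<in> verts G" for a b
  proof -
    have "{?g a, ?g b} \<in> edges F \<longleftrightarrow> {f (?g a), f (?g b)} \<in> edges G"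
      using iso gv[OF that(1)] gv[OF that(2)] unfolding isom_def by blast
    then show ?thesis using fg that by simp
  qed
  have l: "lab F x = ?g (lab G x)" if "x \<in> X" for x
  proof -
    have "lab G x = f (lab F x)" using iso that by (simp add: isom_def)
    moreover have "inj_on f (verts F)" using bij bij_betw_def by blast
    ultimately show ?thesis using lv that by (simp add: inv_into_f_f image_subset_iff)
  qed
  show ?thesis unfolding isom_def using bij' e l by blast
qed

lemma xiso_sym: "lab F ` X \<subseteq> verts F \<Longrightarrow> xiso X F G \<Longrightarrow> xiso X G F"
  using isom_sym xiso_isom by metis

lemma isom_trans:
  assumes "isom X F G f" "isom X G H g" shows "isom X F H (g \<circ> f)"
proof -
  have b1: "bij_betw f (verts F) (verts G)" and b2: "bij_betw g (verts G) (verts H)"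
    using assms by (auto simp: isom_def)
  have fv: "f a \<in> verts G" if "a \<in> verts F" for a using b1 that bij_betwE by blast
  show ?thesis unfolding isom_def
  proof (intro conjI ballI)
    show "bij_betw (g \<circ> f) (verts F) (verts H)" using b1 b2 bij_betw_trans by blast
  next
    fix a b assume "a \<in> verts F" "b \<in> verts F"
    then show "{a, b} \<in> edges F \<longleftrightarrow> {(g \<circ> f) a, (g \<circ> f) b} \<in> edges H"
      using assms fv unfolding isom_def by simp
  next
    fix x assume "x \<in> X" then show "lab H x = (g \<circ> f) (lab F x)" using assms by (simp add: isom_def)
  qed
qed

lemma xiso_trans: "xiso X F G \<Longrightarrow> xiso X G H \<Longrightarrow> xiso X F H"
  using isom_trans xiso_isom by metis

lemma isom_nbrs:
  assumes iso: "isom X F G f" and wF: "wf_graph F" and wG: "wf_graph G" and t: "t \<in> verts F"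
  shows "nbrs G (f t) = f ` nbrs F t"
proof -
  have bij: "bij_betw f (verts F) (verts G)" using iso by (simp add: isom_def)
  have e: "{a,b} \<in> edges F \<longleftrightarrow> {f a, f b} \<in> edges G" if "a \<in> verts F" "b \<in> verts F" for a b
    using iso that by (simp add: isom_def)
  show ?thesis
  proof
    show "nbrs G (f t) \<subseteq> f ` nbrs F t"
    proof
      fix s assume s: "s \<in> nbrs G (f t)"
      then have "s \<in> verts G" using nbrs_verts[OF wG] by blast
      then obtain s0 where s0: "s0 \<in> verts F" "s = f s0" using bij by (metis bij_betw_imp_surj_on imageE)
      then have "{t,s0} \<in> edges F" using e[OF t s0(1)] s by (simp add: nbrs_iff)
      then show "s \<in> f ` nbrs F t" using s0 by (simp add: nbrs_iff)
    qed
  next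
    show "f ` nbrs F t \<subseteq> nbrs G (f t)"
    proof
      fix s assume "s \<in> f ` nbrs F t"
      then obtain s0 where s0: "s0 \<in> nbrs F t" "s = f s0" by blast
      then have "s0 \<in> verts F" using nbrs_verts[OF wF] by blast
      then show "s \<in> nbrs G (f t)" using e[OF t] s0 by (simp add: nbrs_iff)
    qed
  qed
qed

lemma isom_deg:
  assumes iso: "isom X F G f" and wF: "wf_graph F" and wG: "wf_graph G" and t: "t \<in> verts F"
  shows "deg G (f t) = deg F t"
proof -
  have bij: "bij_betw f (verts F) (verts G)" using iso by (simp add: isom_def)
  have "inj_on f (nbrs F t)" using bij nbrs_verts[OF wF] by (meson bij_betw_def inj_on_subset)
  then show ?thesis using isom_nbrs[OF assms] by (simp add: deg_nbrs[OF wF] deg_nbrs[OF wG] card_image)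
qed

lemma isom_labels:
  assumes iso: "isom X F G f" and lv: "lab F ` X \<subseteq> verts F" and t: "t \<in> verts F"
  shows "labels X G (f t) = labels X F t"
proof -
  have bij: "bij_betw f (verts F) (verts G)" using iso by (simp add: isom_def)
  then have inj: "inj_on f (verts F)" by (simp add: bij_betw_def)
  show ?thesis unfolding labels_def
  proof (intro Collect_cong conj_cong refl)
    fix x assume x: "x \<in> X"
    then have "lab G x = f (lab F x)" using iso by (simp add: isom_def)
    moreover have "lab F x \<in> verts F" using lv x by blast
    ultimately show "(lab G x = f t) = (lab F x = t)" using inj t by (metis inj_onD)
  qed
qed

lemma isom_edge:
  "isom X F G f \<Longrightarrow> a \<in> verts F \<Longrightarrow> b \<in> verts F \<Longrightarrow> {a, b} \<in> edges F \<longleftrightarrow> {f a, f b} \<in> edges G"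
  by (simp add: isom_def)

lemma isom_vert: "isom X F G f \<Longrightarrow> a \<in> verts F \<Longrightarrow> f a \<in> verts G"
  unfolding isom_def by (meson bij_betwE)

lemma isom_lab: "isom X F G f \<Longrightarrow> x \<in> X \<Longrightarrow> lab G x = f (lab F x)"
  by (simp add: isom_def)

lemma isom_inj: "isom X F G f \<Longrightarrow> inj_on f (verts F)"
  by (simp add: isom_def bij_betw_def)

lemma isom_surj: "isom X F G f \<Longrightarrow> f ` verts F = verts G"
  by (simp add: isom_def bij_betw_def)

lemma xiso_by_image:
  assumes bij: "bij_betw f (verts F) (verts G)"
    and E: "edges G = (\<lambda>e. f ` e) ` edges F"
    and sub: "\<forall>e\<in>edges F. e \<subseteq> verts F"
    and L: "\<forall>x\<in>X. lab G x = f (lab F x)"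
  shows "isom X F G f"
  unfolding isom_def
proof (intro conjI ballI bij)
  fix a b assume ab: "a \<in> verts F" "b \<in> verts F"
  have inj: "inj_on f (verts F)" using bij by (simp add: bij_betw_def)
  show "{a, b} \<in> edges F \<longleftrightarrow> {f a, f b} \<in> edges G"
  proof
    assume "{a,b} \<in> edges F"
    then have "f ` {a,b} \<in> (\<lambda>e. f ` e) ` edges F" by (rule imageI)
    then show "{f a, f b} \<in> edges G" unfolding E by simp
  next
    assume "{f a, f b} \<in> edges G"
    then obtain e where e: "e \<in> edges F" "{f a, f b} = f ` e" unfolding E by blast
    have s1: "{a,b} \<subseteq> verts F" and s2: "e \<subseteq> verts F" using ab sub e by auto
    have "{a,b} = e" using inj_on_image_eq_iff[OF inj s1 s2] e(2) by simp
    then show "{a,b} \<in> edges F" using e by simp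
  qed
next
  fix x assume "x \<in> X" then show "lab G x = f (lab F x)" using L by simp
qed

lemma contract_swap:
  assumes wf: "wf_graph G" and uv: "{u,v} \<in> edges G"
  shows "isom X (contract G u v) (contract G v u) (\<lambda>x. if x = u then v else x)"
proof -
  have uv': "u \<noteq> v" "u \<in> verts G" "v \<in> verts G" using wf_edge2[OF wf uv] by auto
  let ?s = "\<lambda>x. if x = u then v else (x::nat)"
  let ?m = "\<lambda>x. if x = v then u else (x::nat)"
  let ?m' = "\<lambda>x. if x = u then v else (x::nat)"
  have mm: "?m' = ?s \<circ> ?m" using uv' by (auto simp: fun_eq_iff)
  have bij: "bij_betw ?s (verts G - {v}) (verts G - {u})"
  proof (rule bij_betw_imageI)
    show "inj_on ?s (verts G - {v})" unfolding inj_on_def by auto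
    show "?s ` (verts G - {v}) = verts G - {u}"
    proof
      show "?s ` (verts G - {v}) \<subseteq> verts G - {u}" using uv' by auto
      show "verts G - {u} \<subseteq> ?s ` (verts G - {v})"
      proof
        fix x assume x: "x \<in> verts G - {u}"
        show "x \<in> ?s ` (verts G - {v})"
        proof (cases "x = v")
          case True then show ?thesis using uv' by (intro image_eqI[where x=u]) auto
        next
          case False then show ?thesis using x by (intro image_eqI[where x=x]) auto
        qed
      qed
    qed
  qed
  have E: "edges (contract G v u) = (\<lambda>e. ?s ` e) ` edges (contract G u v)"
  proof -
    have "{v,u} = {u,v}" by (simp add: insert_commute)
    then have "edges (contract G v u) = (\<lambda>e. ?m' ` e) ` (edges G - {{u,v}})"
      by (simp add: contract_simps)
    also have "\<dots> = (\<lambda>e. ?s ` (?m ` e)) ` (edges G - {{u,v}})"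
    proof -
      have pe: "?s ` (?m ` e) = ?m' ` e" for e by (simp only: image_comp mm[symmetric])
      show ?thesis by (simp only: pe)
    qed
    also have "\<dots> = (\<lambda>e. ?s ` e) ` edges (contract G u v)"
      by (subst contract_simps(3)) (rule image_image[symmetric])
    finally show ?thesis .
  qed
  have sub: "\<forall>e\<in>edges (contract G u v). e \<subseteq> verts (contract G u v)"
    using contract_wf[OF wf uv] unfolding wf_graph_def by blast
  have L: "\<forall>x\<in>X. lab (contract G v u) x = ?s (lab (contract G u v) x)"
    using uv' by (auto simp: contract_simps)
  show ?thesis
    by (rule xiso_by_image) (use bij E sub L in \<open>simp_all add: contract_simps\<close>)
qed

lemma rtrancl_map:
  assumes "\<And>y z. {y,z} \<in> E \<Longrightarrow> (h y, h z) \<in> (adj E')\<^sup>*"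
    and "(a,b) \<in> (adj E)\<^sup>*"
  shows "(h a, h b) \<in> (adj E')\<^sup>*"
  using assms(2)
proof (induction rule: rtrancl_induct)
  case base then show ?case by simp
next
  case (step y z) then show ?case using assms(1)[of y z] by (meson adj_iff rtrancl_trans)
qed

lemma isom_connected:
  assumes iso: "isom X F G f" and wF: "wf_graph F" and c: "connected_graph F"
  shows "connected_graph G"
  unfolding connected_graph_def adjrel_eq
proof (intro ballI)
  fix a b assume ab: "a \<in> verts G" "b \<in> verts G"
  obtain a0 b0 where a0: "a0 \<in> verts F" "a = f a0" and b0: "b0 \<in> verts F" "b = f b0"
    using ab isom_surj[OF iso] by (metis imageE)
  have r: "(a0,b0) \<in> (adj (edges F))\<^sup>*" using c a0 b0 by (simp add: connected_graph_def adjrel_eq)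
  have "(f a0, f b0) \<in> (adj (edges G))\<^sup>*"
  proof (rule rtrancl_map[OF _ r])
    fix y z assume "{y,z} \<in> edges F"
    moreover then have "y \<in> verts F" "z \<in> verts F" using wf_edge2[OF wF] by auto
    ultimately show "(f y, f z) \<in> (adj (edges G))\<^sup>*" using isom_edge[OF iso] by auto
  qed
  then show "(a,b) \<in> (adj (edges G))\<^sup>*" using a0 b0 by simp
qed

lemma contract_connected:
  assumes wf: "wf_graph G" and uv: "{u,v} \<in> edges G" and c: "connected_graph G"
  shows "connected_graph (contract G u v)"
  unfolding connected_graph_def adjrel_eq
proof (intro ballI)
  let ?m = "\<lambda>x. if x = v then u else (x::nat)"
  fix a b assume ab: "a \<in> verts (contract G u v)" "b \<in> verts (contract G u v)"
  then have ab': "a \<in> verts G" "b \<in> verts G" "a \<noteq> v" "b \<noteq> v" by (auto simp: contract_simps)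
  have r: "(a,b) \<in> (adj (edges G))\<^sup>*" using c ab' by (simp add: connected_graph_def adjrel_eq)
  have "(?m a, ?m b) \<in> (adj (edges (contract G u v)))\<^sup>*"
  proof (rule rtrancl_map[OF _ r])
    fix y z assume yz: "{y,z} \<in> edges G"
    show "(?m y, ?m z) \<in> (adj (edges (contract G u v)))\<^sup>*"
    proof (cases "{y,z} = {u,v}")
      case True then have "?m y = ?m z" by (auto simp: doubleton_eq_iff)
      then show ?thesis by simp
    next
      case False
      have "?m ` {y,z} \<in> edges (contract G u v)" unfolding contract_simps using yz False by blast
      moreover have "?m ` {y,z} = {?m y, ?m z}" by (rule img_pair)
      ultimately have "(?m y, ?m z) \<in> adj (edges (contract G u v))" unfolding adj_iff by metis
      then show ?thesis by (rule r_into_rtrancl)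
    qed
  qed
  then show "(a,b) \<in> (adj (edges (contract G u v)))\<^sup>*" using ab' by simp
qed

lemma uncontract_connected:
  assumes wf: "wf_graph G" and uv: "{u,v} \<in> edges G" and c: "connected_graph (contract G u v)"
  shows "connected_graph G"
  unfolding connected_graph_def adjrel_eq
proof (intro ballI)
  let ?m = "\<lambda>x. if x = v then u else (x::nat)"
  have uv': "u \<noteq> v" "u \<in> verts G" "v \<in> verts G" using wf_edge2[OF wf uv] by auto
  have same: "(s, s') \<in> (adj (edges G))\<^sup>*" if "?m s = ?m s'" for s s'
  proof (cases "s = s'")
    case True then show ?thesis by simp
  next
    case False
    then have "{s,s'} = {u,v}" using that by (auto split: if_splits)
    then have "(s,s') \<in> adj (edges G)" using uv by simp
    then show ?thesis by blast
  qed
  have main: "(s, t) \<in> (adj (edges G))\<^sup>*"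
    if r: "(s', t') \<in> (adj (edges (contract G u v)))\<^sup>*" and st: "?m s = s'" "?m t = t'" for s' t' s t
    using r st(2)
  proof (induction arbitrary: t rule: rtrancl_induct)
    case base then show ?case using same st(1) by simp
  next
    case (step y' z')
    obtain e where e: "e \<in> edges G" "{y',z'} = ?m ` e" using step(2) unfolding contract_simps by auto
    obtain p q where pq: "e = {p,q}" using wf_edge[OF wf e(1)] by blast
    have "{y',z'} = {?m p, ?m q}" using e(2) pq by simp
    then consider "?m p = y'" "?m q = z'" | "?m q = y'" "?m p = z'" by (auto simp: doubleton_eq_iff)
    then show ?case
    proof cases
      case 1
      have "(s, p) \<in> (adj (edges G))\<^sup>*" using step(3)[of p] 1 by simp
      moreover have "(p,q) \<in> adj (edges G)" using e pq by simp
      moreover have "(q, t) \<in> (adj (edges G))\<^sup>*" using same 1 step(4) by simp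
      ultimately show ?thesis by (meson rtrancl_into_rtrancl rtrancl_trans)
    next
      case 2
      have "(s, q) \<in> (adj (edges G))\<^sup>*" using step(3)[of q] 2 by simp
      moreover have "(q,p) \<in> adj (edges G)" using e pq by (simp add: insert_commute)
      moreover have "(p, t) \<in> (adj (edges G))\<^sup>*" using same 2 step(4) by simp
      ultimately show ?thesis by (meson rtrancl_into_rtrancl rtrancl_trans)
    qed
  qed
  fix a b assume ab: "a \<in> verts G" "b \<in> verts G"
  have "?m a \<in> verts (contract G u v)" "?m b \<in> verts (contract G u v)"
    using ab uv' by (auto simp: contract_simps)
  then have "(?m a, ?m b) \<in> (adj (edges (contract G u v)))\<^sup>*"
    using c by (simp add: connected_graph_def adjrel_eq)
  then show "(a,b) \<in> (adj (edges G))\<^sup>*" using main by blast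
qed

lemma walk_take: "walk E ps \<Longrightarrow> walk E (take k ps)"
  unfolding walk_def by auto

lemma walk_drop: "walk E ps \<Longrightarrow> walk E (drop k ps)"
  unfolding walk_def by (auto simp: add.commute)

lemma walk_snoc: "walk E ps \<Longrightarrow> ps \<noteq> [] \<Longrightarrow> {last ps, z} \<in> E \<Longrightarrow> walk E (ps @ [z])"
  unfolding walk_def
proof (intro allI impI)
  fix i assume w: "\<forall>i. Suc i < length ps \<longrightarrow> {ps ! i, ps ! Suc i} \<in> E" and ne: "ps \<noteq> []"
    and l: "{last ps, z} \<in> E" and i: "Suc i < length (ps @ [z])"
  show "{(ps @ [z]) ! i, (ps @ [z]) ! Suc i} \<in> E"
  proof (cases "Suc i < length ps")
    case True then show ?thesis using w by (simp add: nth_append)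
  next
    case False
    then have "i = length ps - 1" using i by simp
    then show ?thesis using l ne by (simp add: nth_append last_conv_nth)
  qed
qed

lemma walk_Cons: "walk E (x # y # ps) \<longleftrightarrow> {x,y} \<in> E \<and> walk E (y # ps)"
  unfolding walk_def
proof
  assume h: "\<forall>i. Suc i < length (x # y # ps) \<longrightarrow> {(x # y # ps) ! i, (x # y # ps) ! Suc i} \<in> E"
  have "{x,y} \<in> E" using h[rule_format, of 0] by simp
  moreover have "\<forall>i. Suc i < length (y # ps) \<longrightarrow> {(y # ps) ! i, (y # ps) ! Suc i} \<in> E"
    using h by (metis Suc_less_eq length_Cons nth_Cons_Suc)
  ultimately show "{x, y} \<in> E \<and> (\<forall>i. Suc i < length (y # ps) \<longrightarrow> {(y # ps) ! i, (y # ps) ! Suc i} \<in> E)" by blast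
next
  assume h: "{x, y} \<in> E \<and> (\<forall>i. Suc i < length (y # ps) \<longrightarrow> {(y # ps) ! i, (y # ps) ! Suc i} \<in> E)"
  show "\<forall>i. Suc i < length (x # y # ps) \<longrightarrow> {(x # y # ps) ! i, (x # y # ps) ! Suc i} \<in> E"
  proof (intro allI impI)
    fix i assume "Suc i < length (x # y # ps)"
    then show "{(x # y # ps) ! i, (x # y # ps) ! Suc i} \<in> E" using h by (cases i) auto
  qed
qed

lemma walk_reach: "walk E ps \<Longrightarrow> i < length ps \<Longrightarrow> (ps!0, ps!i) \<in> (adj E)\<^sup>*"
proof (induction i)
  case 0 then show ?case by simp
next
  case (Suc i)
  then have "(ps!0, ps!i) \<in> (adj E)\<^sup>*" by simp
  moreover have "{ps!i, ps!Suc i} \<in> E" using Suc.prems unfolding walk_def by blast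
  ultimately show ?case by (simp add: rtrancl_into_rtrancl)
qed

lemma path_of_rtrancl:
  assumes "(s,t) \<in> (adj E)\<^sup>*"
  shows "\<exists>ps. distinct ps \<and> ps \<noteq> [] \<and> hd ps = s \<and> last ps = t \<and> walk E ps"
  using assms
proof (induction rule: rtrancl_induct)
  case base
  show ?case by (rule exI[of _ "[s]"]) (simp add: walk_def)
next
  case (step y z)
  then obtain ps where ps: "distinct ps" "ps \<noteq> []" "hd ps = s" "last ps = y" "walk E ps" by blast
  show ?case
  proof (cases "z \<in> set ps")
    case True
    then obtain k where k: "k < length ps" "ps!k = z" by (metis in_set_conv_nth)
    let ?qs = "take (Suc k) ps"
    have "distinct ?qs" using ps(1) by simp
    moreover have "?qs \<noteq> []" using ps(2) by simp
    moreover have "hd ?qs = s" using ps(2,3) by (simp add: hd_take)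
    moreover have "last ?qs = z" using k by (simp add: take_Suc_conv_app_nth)
    moreover have "walk E ?qs" using ps(5) by (rule walk_take)
    ultimately show ?thesis by blast
  next
    case False
    have "distinct (ps @ [z])" using ps(1) False by simp
    moreover have "walk E (ps @ [z])" using walk_snoc[OF ps(5) ps(2)] step(2) ps(4) by simp
    ultimately show ?thesis using ps by (intro exI[of _ "ps @ [z]"]) simp
  qed
qed

lemma cycle_false:
  assumes ac: "acyclic_graph G" and d: "distinct vs" and l: "length vs \<ge> 3"
    and s: "set vs \<subseteq> verts G" and w: "walk (edges G) vs" and c: "{last vs, hd vs} \<in> edges G"
  shows False
proof -
  have "\<forall>i < length vs. {vs ! i, vs ! ((i + 1) mod length vs)} \<in> edges G"
  proof (intro allI impI)
    fix i assume i: "i < length vs"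
    show "{vs ! i, vs ! ((i + 1) mod length vs)} \<in> edges G"
    proof (cases "Suc i < length vs")
      case True then show ?thesis using w unfolding walk_def by simp
    next
      case False
      then have "Suc i = length vs" using i by simp
      then have "(i + 1) mod length vs = 0" "i = length vs - 1" by auto
      moreover have "vs \<noteq> []" using l by auto
      ultimately show ?thesis using c by (simp add: last_conv_nth hd_conv_nth)
    qed
  qed
  then show False using ac d l s unfolding acyclic_graph_def by blast
qed

definition compR :: "'x xgraph \<Rightarrow> (nat \<times> nat) set" where
  "compR F = {(u, v). u \<in> verts F \<and> v \<in> verts F \<and> (u, v) \<in> (adjrel F)\<^sup>*}"

lemma comp_in: "t \<in> verts F \<Longrightarrow> compR F `` {t} \<in> components F"
  unfolding components_def compR_def by (rule quotientI)

lemma edges_finite: "wf_graph G \<Longrightarrow> finite (edges G)"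
  unfolding wf_graph_def by (meson Pow_iff finite_Pow_iff finite_subset subsetI)

lemma xforest_wf: "is_xforest X F \<Longrightarrow> wf_graph F"
  by (simp add: is_xforest_def)

lemma xforest_lab: "is_xforest X F \<Longrightarrow> lab F ` X \<subseteq> verts F"
  by (simp add: is_xforest_def)

lemma xforest_acyclic:
  assumes F: "is_xforest X F" shows "acyclic_graph F"
  unfolding acyclic_graph_def
proof
  assume "\<exists>vs. 3 \<le> length vs \<and> distinct vs \<and> set vs \<subseteq> verts F \<and>
      (\<forall>i<length vs. {vs ! i, vs ! ((i + 1) mod length vs)} \<in> edges F)"
  then obtain vs where vs: "3 \<le> length vs" "distinct vs" "set vs \<subseteq> verts F"
      "\<forall>i<length vs. {vs ! i, vs ! ((i + 1) mod length vs)} \<in> edges F" by blast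
  have wf: "wf_graph F" using F by (simp add: is_xforest_def)
  let ?t = "vs!0"
  let ?K = "compR F `` {?t}"
  have "0 < length vs" using vs(1) by linarith
  then have "?t \<in> set vs" by (rule nth_mem)
  then have t: "?t \<in> verts F" using vs(3) by blast
  have K: "?K \<in> components F" using comp_in[OF t] .
  have w: "walk (edges F) vs" unfolding walk_def
  proof (intro allI impI)
    fix i assume i: "Suc i < length vs"
    then have "Suc i mod length vs = Suc i" by simp
    then show "{vs ! i, vs ! Suc i} \<in> edges F" using vs(4) i by (metis Suc_eq_plus1 Suc_lessD)
  qed
  have inK: "vs!i \<in> ?K" if "i < length vs" for i
  proof -
    have "(?t, vs!i) \<in> (adj (edges F))\<^sup>*" using walk_reach[OF w that] .
    moreover have "vs!i \<in> verts F" using vs(3) that by auto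
    ultimately show ?thesis using t by (simp add: compR_def adjrel_eq)
  qed
  have "is_xtree {x \<in> X. lab F x \<in> ?K} (induced F ?K)" using F K unfolding is_xforest_def by blast
  then have ac: "acyclic_graph (induced F ?K)" by (simp add: is_xtree_def is_tree_def)
  have "\<forall>i<length vs. {vs ! i, vs ! ((i + 1) mod length vs)} \<in> edges (induced F ?K)"
  proof (intro allI impI)
    fix i assume i: "i < length vs"
    have "(i + 1) mod length vs < length vs" using i by (metis length_pos_if_in_set mod_less_divisor nth_mem)
    then show "{vs ! i, vs ! ((i + 1) mod length vs)} \<in> edges (induced F ?K)"
      using vs(4) i inK unfolding induced_def by simp
  qed
  moreover have "set vs \<subseteq> verts (induced F ?K)" using inK by (auto simp: induced_def in_set_conv_nth)
  ultimately show False using ac vs(1,2) unfolding acyclic_graph_def by blast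
qed

lemma xforest_deg:
  assumes F: "is_xforest X F" and t: "t \<in> verts F" and nl: "labels X F t = {}"
  shows "deg F t \<ge> 3"
proof -
  have wf: "wf_graph F" using F by (simp add: is_xforest_def)
  let ?K = "compR F `` {t}"
  have K: "?K \<in> components F" using comp_in[OF t] .
  have tK: "t \<in> ?K" using t by (simp add: compR_def)
  have T: "is_xtree {x \<in> X. lab F x \<in> ?K} (induced F ?K)" using F K unfolding is_xforest_def by blast
  have "\<not> labeled {x \<in> X. lab F x \<in> ?K} (induced F ?K) t"
    using nl by (auto simp: labeled_def labels_def induced_def)
  then have "deg (induced F ?K) t \<ge> 3" using T tK by (simp add: is_xtree_def induced_def)
  moreover have "deg (induced F ?K) t \<le> deg F t"
    unfolding deg_def induced_def using edges_finite[OF wf] by (auto intro!: card_mono)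
  ultimately show ?thesis by simp
qed

lemma acyclic_nocommon:
  assumes wf: "wf_graph G" and ac: "acyclic_graph G" and uv: "{u,v} \<in> edges G"
  shows "nocommon G u v"
  unfolding nocommon_def
proof (intro allI notI)
  fix t assume h: "{u,t} \<in> edges G \<and> {v,t} \<in> edges G"
  have d: "distinct [u,v,t]" using wf_edge2[OF wf] uv h by auto
  have w: "walk (edges G) [u,v,t]" unfolding walk_Cons using uv h by (auto simp: walk_def insert_commute)
  have s: "set [u,v,t] \<subseteq> verts G" using wf_edge2[OF wf] uv h by auto
  show False by (rule cycle_false[OF ac d _ s w]) (use h in \<open>auto simp: insert_commute\<close>)
qed

lemma no_alt_path:
  assumes wf: "wf_graph G" and ac: "acyclic_graph G" and uv: "{u,v} \<in> edges G"
    and r: "(u,v) \<in> (adj (edges G - {{u,v}}))\<^sup>*"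
  shows False
proof -
  have uv': "u \<noteq> v" using wf_edge2[OF wf uv] by simp
  obtain ps where ps: "distinct ps" "ps \<noteq> []" "hd ps = u" "last ps = v" "walk (edges G - {{u,v}}) ps"
    using path_of_rtrancl[OF r] by blast
  have l2: "length ps \<ge> 2"
  proof (rule ccontr)
    assume "\<not> length ps \<ge> 2"
    moreover have "length ps > 0" using ps(2) by simp
    ultimately have "length ps = 1" by linarith
    then obtain a where "ps = [a]" by (metis One_nat_def length_0_conv length_Suc_conv)
    then have "hd ps = last ps" by simp
    then show False using ps uv' by simp
  qed
  have l3: "length ps \<ge> 3"
  proof (rule ccontr)
    assume "\<not> length ps \<ge> 3"
    then have "length ps = 2" using l2 by simp
    then obtain a b where "ps = [a,b]" by (metis (no_types, lifting) One_nat_def Suc_1 length_0_conv length_Suc_conv)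
    then have "{ps!0, ps!Suc 0} \<in> edges G - {{u,v}}" using ps(5) unfolding walk_def by simp
    moreover have "ps!0 = u" "ps!Suc 0 = v" using ps(3,4) \<open>ps = [a,b]\<close> by simp_all
    ultimately show False by simp
  qed
  have w: "walk (edges G) ps" using ps(5) unfolding walk_def by blast
  have s: "set ps \<subseteq> verts G"
  proof
    fix x assume "x \<in> set ps"
    then obtain i where i: "i < length ps" "ps!i = x" by (metis in_set_conv_nth)
    show "x \<in> verts G"
    proof (cases "Suc i < length ps")
      case True then show ?thesis using w i wf_edge2[OF wf] unfolding walk_def by blast
    next
      case False
      then have "i > 0" "Suc (i - 1) < length ps" "Suc (i-1) = i" using i l3 by auto
      then show ?thesis using w i wf_edge2[OF wf] unfolding walk_def by metis
    qed
  qed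
  show False by (rule cycle_false[OF ac ps(1) l3 s w]) (use uv ps in \<open>simp add: insert_commute\<close>)
qed

definition binary :: "'x set \<Rightarrow> 'x xgraph \<Rightarrow> bool" where
  "binary X G \<longleftrightarrow> (\<forall>t\<in>verts G. (deg G t = 1 \<and> card (labels X G t) = 1) \<or> (deg G t = 3 \<and> labels X G t = {}))"

lemma labeled_labels: "labeled X G t \<longleftrightarrow> labels X G t \<noteq> {}"
  by (auto simp: labeled_def labels_def)

lemma inCX_xtree: "in_CX X C \<Longrightarrow> is_xtree X C" by (simp add: in_CX_def)
lemma xtree_wf: "is_xtree X C \<Longrightarrow> wf_graph C" by (simp add: is_xtree_def is_tree_def)
lemma xtree_lab: "is_xtree X C \<Longrightarrow> lab C ` X \<subseteq> verts C" by (simp add: is_xtree_def)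
lemma xtree_acyclic: "is_xtree X C \<Longrightarrow> acyclic_graph C" by (simp add: is_xtree_def is_tree_def)
lemma xtree_connected: "is_xtree X C \<Longrightarrow> connected_graph C" by (simp add: is_xtree_def is_tree_def)

lemma inCX_binary:
  assumes C: "in_CX X C" shows "binary X C"
  unfolding binary_def
proof
  fix t assume t: "t \<in> verts C"
  have bij: "bij_betw (lab C) X (leaves C)" using C by (simp add: in_CX_def)
  show "(deg C t = 1 \<and> card (labels X C t) = 1) \<or> (deg C t = 3 \<and> labels X C t = {})"
  proof (cases "t \<in> leaves C")
    case True
    then have d: "deg C t = 1" by (simp add: leaves_def)
    obtain x0 where x0: "x0 \<in> X" "lab C x0 = t" using bij True by (metis bij_betw_imp_surj_on imageE)
    have "labels X C t = {x0}"
    proof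
      show "labels X C t \<subseteq> {x0}"
        using bij x0 unfolding labels_def bij_betw_def inj_on_def by auto
      show "{x0} \<subseteq> labels X C t" using x0 by (simp add: labels_def)
    qed
    then show ?thesis using d by simp
  next
    case False
    then have "\<not> labeled X C t \<and> deg C t = 3" using C t by (simp add: in_CX_def)
    then show ?thesis by (simp add: labeled_labels)
  qed
qed

lemma binary_inCX:
  assumes T: "is_xtree X G" and B: "binary X G"
  shows "in_CX X G"
proof -
  have lv: "lab G ` X \<subseteq> verts G" using T by (rule xtree_lab)
  have inj: "inj_on (lab G) X"
  proof
    fix x y assume xy: "x \<in> X" "y \<in> X" "lab G x = lab G y"
    let ?t = "lab G x"
    have t: "?t \<in> verts G" using lv xy by blast
    have "x \<in> labels X G ?t" "y \<in> labels X G ?t" using xy by (auto simp: labels_def)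
    then have "labels X G ?t \<noteq> {}" by blast
    then have "card (labels X G ?t) = 1" using B t by (auto simp: binary_def)
    then show "x = y" using \<open>x \<in> labels X G ?t\<close> \<open>y \<in> labels X G ?t\<close> by (metis card_1_singletonE singletonD)
  qed
  have img: "lab G ` X = leaves G"
  proof
    show "lab G ` X \<subseteq> leaves G"
    proof
      fix t assume "t \<in> lab G ` X"
      then obtain x where x: "x \<in> X" "t = lab G x" by blast
      then have t: "t \<in> verts G" using lv by blast
      have "labels X G t \<noteq> {}" using x by (auto simp: labels_def)
      then have "deg G t = 1" using B t by (auto simp: binary_def)
      then show "t \<in> leaves G" using t by (simp add: leaves_def)
    qed
    show "leaves G \<subseteq> lab G ` X"
    proof
      fix t assume "t \<in> leaves G"
      then have t: "t \<in> verts G" "deg G t = 1" by (auto simp: leaves_def)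
      then have "card (labels X G t) = 1" using B by (auto simp: binary_def)
      then have "labels X G t \<noteq> {}" by auto
      then show "t \<in> lab G ` X" by (auto simp: labels_def)
    qed
  qed
  have int: "\<forall>v\<in>verts G - leaves G. \<not> labeled X G v \<and> deg G v = 3"
  proof
    fix t assume "t \<in> verts G - leaves G"
    then have t: "t \<in> verts G" "deg G t \<noteq> 1" by (auto simp: leaves_def)
    then show "\<not> labeled X G t \<and> deg G t = 3" using B by (auto simp: binary_def labeled_labels)
  qed
  show ?thesis unfolding in_CX_def using T inj img int by (simp add: bij_betw_def)
qed

lemma binary_deg_le3: "binary X G \<Longrightarrow> t \<in> verts G \<Longrightarrow> deg G t \<le> 3"
  by (auto simp: binary_def)

lemma nbrs_nonempty: "{u,v} \<in> edges G \<Longrightarrow> v \<in> nbrs G u"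
  by (simp add: nbrs_iff)

lemma deg_pos: "wf_graph G \<Longrightarrow> {u,v} \<in> edges G \<Longrightarrow> deg G u \<ge> 1"
  using nbrs_finite[of G u] nbrs_nonempty[of u v G] deg_nbrs[of G u]
  by (metis One_nat_def Suc_leI card_gt_0_iff empty_iff)

lemma deg1_nbrs: "wf_graph G \<Longrightarrow> {u,v} \<in> edges G \<Longrightarrow> deg G u = 1 \<Longrightarrow> nbrs G u = {v}"
  using nbrs_nonempty[of u v G] deg_nbrs[of G u] by (metis card_1_singletonE singletonD)

lemma two_leaves:
  assumes C: "in_CX X C" and uv: "{u,v} \<in> edges C" and du: "deg C u = 1" and dv: "deg C v = 1"
  shows "card X \<le> 2"
proof -
  have T: "is_xtree X C" using C by (rule inCX_xtree)
  have wf: "wf_graph C" using T by (rule xtree_wf)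
  have nu: "nbrs C u = {v}" using deg1_nbrs[OF wf uv du] .
  have nv: "nbrs C v = {u}" using deg1_nbrs[OF wf _ dv, of u] uv by (simp add: insert_commute)
  have u: "u \<in> verts C" using wf_edge2[OF wf uv] by simp
  have reach: "t \<in> {u,v}" if "(u,t) \<in> (adj (edges C))\<^sup>*" for t
    using that
  proof (induction rule: rtrancl_induct)
    case base then show ?case by simp
  next
    case (step y z)
    then have "z \<in> nbrs C y" by (simp add: nbrs_iff)
    then show ?case using step(3) nu nv by auto
  qed
  have "verts C \<subseteq> {u,v}"
  proof
    fix t assume "t \<in> verts C"
    then have "(u,t) \<in> (adj (edges C))\<^sup>*"
      using xtree_connected[OF T] u by (simp add: connected_graph_def adjrel_eq)
    then show "t \<in> {u,v}" using reach by blast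
  qed
  then have "leaves C \<subseteq> {u,v}" by (auto simp: leaves_def)
  then have "card (leaves C) \<le> card {u,v}" by (intro card_mono) auto
  moreover have "card {u,v} \<le> 2" by (cases "u = v") auto
  ultimately have "card (leaves C) \<le> 2" by linarith
  moreover have "card X = card (leaves C)" using C unfolding in_CX_def by (metis bij_betw_same_card)
  ultimately show ?thesis by simp
qed

lemma inCX_step:
  assumes C: "in_CX X C" and X3: "card X \<ge> 3" and st: "one_step X C G"
  shows "\<exists>a b. a \<noteq> b \<and> {a,b} \<in> edges C \<and> G = contract C a b"
proof -
  obtain a b where ab: "a \<noteq> b" "{a,b} \<in> edges C" "G = contract C a b \<or> (safe_deletion X C a b \<and> G = delete C a b)"
    using st by (auto simp: one_step_def)
  have wf: "wf_graph C" using C inCX_xtree xtree_wf by blast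
  have B: "binary X C" using C by (rule inCX_binary)
  have av: "a \<in> verts C" "b \<in> verts C" using wf_edge2[OF wf ab(2)] by auto
  have "\<not> safe_deletion X C a b"
  proof
    assume s: "safe_deletion X C a b"
    have "deg C a \<le> 3" "deg C b \<le> 3" using binary_deg_le3[OF B] av by auto
    then have "labels X C a \<noteq> {}" "labels X C b \<noteq> {}" using s by (auto simp: safe_deletion_def labeled_labels)
    then have "deg C a = 1" "deg C b = 1" using B av by (auto simp: binary_def)
    then have "card X \<le> 2" using two_leaves[OF C ab(2)] by simp
    then show False using X3 by simp
  qed
  then show ?thesis using ab by blast
qed

lemma contract_lab_verts:
  "lab G ` X \<subseteq> verts G \<Longrightarrow> u \<in> verts G \<Longrightarrow> u \<noteq> v \<Longrightarrow> lab (contract G u v) ` X \<subseteq> verts (contract G u v)"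
  by (auto simp: contract_simps)

lemma labels_disj: "u \<noteq> v \<Longrightarrow> labels X G u \<inter> labels X G v = {}"
  by (auto simp: labels_def)

lemma labels_finite: "finite X \<Longrightarrow> finite (labels X G t)"
  by (simp add: labels_def)

lemma local_u:
  assumes B: "binary X C" and wC: "wf_graph C" and lC: "lab C ` X \<subseteq> verts C"
    and ab: "{a,b} \<in> edges C" and ncC: "nocommon C a b"
    and F: "is_xforest X F" and uv: "{u,v} \<in> edges F" and ncF: "nocommon F u v"
    and iso: "isom X (contract C a b) (contract F u v) \<psi>" and fin: "finite X"
  shows "\<psi> a = u"
proof (rule ccontr)
  assume ne: "\<psi> a \<noteq> u"
  have wF: "wf_graph F" using F by (rule xforest_wf)
  have wC': "wf_graph (contract C a b)" using contract_wf[OF wC ab] .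
  have wF': "wf_graph (contract F u v)" using contract_wf[OF wF uv] .
  have ab': "a \<noteq> b" "a \<in> verts C" "b \<in> verts C" using wf_edge2[OF wC ab] by auto
  have uv': "u \<noteq> v" "u \<in> verts F" "v \<in> verts F" using wf_edge2[OF wF uv] by auto
  have lC': "lab (contract C a b) ` X \<subseteq> verts (contract C a b)"
    using contract_lab_verts[OF lC ab'(2,1)] .
  have "u \<in> verts (contract F u v)" using uv' by (simp add: contract_simps)
  then obtain q where q: "q \<in> verts (contract C a b)" "\<psi> q = u" using isom_surj[OF iso] by (metis imageE)
  have qa: "q \<noteq> a" using q ne by auto
  have qC: "q \<in> verts C" "q \<noteq> b" using q by (auto simp: contract_simps)
  have dq: "deg (contract C a b) q = deg C q" using contract_deg_t[OF wC ab _ ncC] qa qC by simp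
  have lq: "labels X (contract C a b) q = labels X C q" using contract_labels_t qa qC by metis
  have d1: "deg (contract F u v) u = deg C q" using isom_deg[OF iso wC' wF' q(1)] q(2) dq by simp
  have l1: "labels X (contract F u v) u = labels X C q" using isom_labels[OF iso lC' q(1)] q(2) lq by simp
  have ds: "deg (contract F u v) u + 2 = deg F u + deg F v" using contract_deg_u[OF wF uv ncF] .
  have ls: "labels X (contract F u v) u = labels X F u \<union> labels X F v" by (rule contract_labels_u)
  have du: "deg F u \<ge> 1" using deg_pos[OF wF uv] .
  have dv: "deg F v \<ge> 1" using deg_pos[OF wF, of v u] uv by (simp add: insert_commute)
  from B qC(1) consider "deg C q = 1" "card (labels X C q) = 1" | "deg C q = 3" "labels X C q = {}"
    unfolding binary_def by blast
  then show False
  proof cases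
    case 1
    have "deg F u \<le> 2" "deg F v \<le> 2" using ds d1 1 dv du by linarith+
    then have "labels X F u \<noteq> {}" "labels X F v \<noteq> {}" using xforest_deg[OF F] uv' by force+
    then have "card (labels X F u) \<ge> 1" "card (labels X F v) \<ge> 1"
      using labels_finite[OF fin] by (simp_all add: Suc_leI card_gt_0_iff)
    moreover have "card (labels X F u \<union> labels X F v) = card (labels X F u) + card (labels X F v)"
      by (rule card_Un_disjoint) (use labels_finite[OF fin] labels_disj[OF uv'(1), of X F] in auto)
    ultimately show False using 1 l1 ls by simp
  next
    case 2
    then have "labels X F u = {}" "labels X F v = {}" using l1 ls by auto
    then have "deg F u \<ge> 3" "deg F v \<ge> 3" using xforest_deg[OF F] uv' by auto
    then show False using ds d1 2 by linarith
  qed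
qed

lemma uncontract_iso:
  assumes wH: "wf_graph H" and wG: "wf_graph G"
    and ab: "{a,b} \<in> edges H" and uv: "{u,v} \<in> edges G"
    and ncH: "nocommon H a b" and ncG: "nocommon G u v"
    and iso: "isom X (contract H a b) (contract G u v) \<psi>" and \<psi>a: "\<psi> a = u"
    and N: "\<psi> ` (nbrs H a - {b}) = nbrs G u - {v}"
    and L: "\<forall>x\<in>X. (lab H x = a \<longleftrightarrow> lab G x = u)"
    and lH: "lab H ` X \<subseteq> verts H"
  shows "isom X H G (\<lambda>t. if t = b then v else \<psi> t)"
proof -
  let ?T = "\<lambda>t. if t = b then v else \<psi> t"
  have ab': "a \<noteq> b" "a \<in> verts H" "b \<in> verts H" using wf_edge2[OF wH ab] by auto
  have uv': "u \<noteq> v" "u \<in> verts G" "v \<in> verts G" using wf_edge2[OF wG uv] by auto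
  have bij: "bij_betw \<psi> (verts H - {b}) (verts G - {v})" using iso by (simp add: isom_def contract_simps)
  have inj: "inj_on \<psi> (verts H - {b})" using bij by (simp add: bij_betw_def)
  have img: "\<psi> ` (verts H - {b}) = verts G - {v}" using bij by (simp add: bij_betw_def)
  have pv: "\<psi> y \<in> verts G - {v}" if "y \<in> verts H - {b}" for y using img that by blast
  have pu: "\<psi> y \<noteq> u" if "y \<in> verts H - {a,b}" for y
    using inj that ab' \<psi>a by (metis DiffI Diff_insert2 DiffD1 DiffD2 inj_onD insertCI singletonD)
  have e': "{x,y} \<in> edges (contract H a b) \<longleftrightarrow> {\<psi> x, \<psi> y} \<in> edges (contract G u v)"
    if "x \<in> verts H - {b}" "y \<in> verts H - {b}" for x y
    using isom_edge[OF iso] that by (simp add: contract_simps)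
  have h1: "{a,y} \<in> edges H \<longleftrightarrow> {u, \<psi> y} \<in> edges G" if y: "y \<in> verts H - {a,b}" for y
  proof -
    have sub: "nbrs H a - {b} \<subseteq> verts H - {b}" using nbrs_verts[OF wH] by blast
    have "{a,y} \<in> edges H \<longleftrightarrow> y \<in> nbrs H a - {b}" using y by (simp add: nbrs_iff)
    also have "\<dots> \<longleftrightarrow> \<psi> y \<in> \<psi> ` (nbrs H a - {b})"
      using inj sub y by (metis Diff_iff Diff_insert2 inj_on_image_mem_iff)
    also have "\<dots> \<longleftrightarrow> \<psi> y \<in> nbrs G u - {v}" using N by simp
    also have "\<dots> \<longleftrightarrow> {u, \<psi> y} \<in> edges G" using pv[of y] y by (simp add: nbrs_iff)
    finally show ?thesis .
  qed
  have h2: "{b,y} \<in> edges H \<longleftrightarrow> {v, \<psi> y} \<in> edges G" if y: "y \<in> verts H - {a,b}" for y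
  proof -
    have y': "y \<notin> {a,b}" using y by simp
    have py: "\<psi> y \<notin> {u,v}" using pv[of y] pu[of y] y by auto
    have "{a,y} \<in> edges (contract H a b) \<longleftrightarrow> {u, \<psi> y} \<in> edges (contract G u v)"
      using e'[of a y] y ab' \<psi>a by simp
    then have "({a,y} \<in> edges H \<or> {b,y} \<in> edges H) \<longleftrightarrow> ({u, \<psi> y} \<in> edges G \<or> {v, \<psi> y} \<in> edges G)"
      using contract_c2[OF wH y'] contract_c2[OF wG py] by simp
    moreover have "\<not> ({a,y} \<in> edges H \<and> {b,y} \<in> edges H)" using ncH by (simp add: nocommon_def)
    moreover have "\<not> ({u,\<psi> y} \<in> edges G \<and> {v,\<psi> y} \<in> edges G)" using ncG by (simp add: nocommon_def)
    ultimately show ?thesis using h1[OF y] by blast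
  qed
  have h3: "{x,y} \<in> edges H \<longleftrightarrow> {\<psi> x, \<psi> y} \<in> edges G" if x: "x \<in> verts H - {a,b}" and y: "y \<in> verts H - {a,b}" for x y
  proof -
    have px: "\<psi> x \<notin> {u,v}" using pv[of x] pu[of x] x by auto
    have py: "\<psi> y \<notin> {u,v}" using pv[of y] pu[of y] y by auto
    have "{x,y} \<in> edges H \<longleftrightarrow> {x,y} \<in> edges (contract H a b)" using contract_c1[OF wH, of x a b y] x y by simp
    also have "\<dots> \<longleftrightarrow> {\<psi> x, \<psi> y} \<in> edges (contract G u v)" using e' x y by simp
    also have "\<dots> \<longleftrightarrow> {\<psi> x, \<psi> y} \<in> edges G" using contract_c1[OF wG px py] .
    finally show ?thesis .
  qed
  have noloopH: "{x,x} \<notin> edges H" for x using wf_edge2[OF wH, of x x] by auto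
  have noloopG: "{x,x} \<notin> edges G" for x using wf_edge2[OF wG, of x x] by auto
  have Tv: "?T t \<in> verts G" if "t \<in> verts H" for t using that pv uv' by auto
  have bijT: "bij_betw ?T (verts H) (verts G)"
  proof (rule bij_betw_imageI)
    show "inj_on ?T (verts H)"
    proof
      fix x y assume xy: "x \<in> verts H" "y \<in> verts H" "?T x = ?T y"
      show "x = y"
      proof (cases "x = b"; cases "y = b")
        assume "x = b" "y = b" then show ?thesis by simp
      next
        assume "x = b" "y \<noteq> b" then show ?thesis using xy pv[of y] by auto
      next
        assume "x \<noteq> b" "y = b" then show ?thesis using xy pv[of x] by auto
      next
        assume "x \<noteq> b" "y \<noteq> b" then show ?thesis using xy inj by (auto dest: inj_onD)
      qed
    qed
    show "?T ` verts H = verts G"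
    proof
      show "?T ` verts H \<subseteq> verts G" using Tv by blast
      show "verts G \<subseteq> ?T ` verts H"
      proof
        fix z assume z: "z \<in> verts G"
        show "z \<in> ?T ` verts H"
        proof (cases "z = v")
          case True then show ?thesis using ab' by (intro image_eqI[where x=b]) auto
        next
          case False
          then obtain y where "y \<in> verts H - {b}" "z = \<psi> y" using img z by blast
          then show ?thesis by (intro image_eqI[where x=y]) auto
        qed
      qed
    qed
  qed
  have edgesT: "{x,y} \<in> edges H \<longleftrightarrow> {?T x, ?T y} \<in> edges G" if x: "x \<in> verts H" and y: "y \<in> verts H" for x y
  proof -
    have Ta: "?T a = u" using ab' \<psi>a by simp
    have Tb: "?T b = v" by simp
    have To: "?T t = \<psi> t" if "t \<noteq> b" for t using that by simp
    consider "x = a" | "x = b" | "x \<in> verts H - {a,b}" using x by blast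
    then show ?thesis
    proof cases
      case 1
      consider "y = a" | "y = b" | "y \<in> verts H - {a,b}" using y by blast
      then show ?thesis
      proof cases
        case 1 then show ?thesis using \<open>x = a\<close> Ta noloopH noloopG by simp
      next
        case 2 then show ?thesis using \<open>x = a\<close> Ta Tb ab uv ab'(1) by simp
      next
        case 3 then show ?thesis using \<open>x = a\<close> Ta To h1 by auto
      qed
    next
      case 2
      consider "y = a" | "y = b" | "y \<in> verts H - {a,b}" using y by blast
      then show ?thesis
      proof cases
        case 1 then show ?thesis using \<open>x = b\<close> Ta Tb ab uv ab'(1) by (simp add: insert_commute)
      next
        case 2 then show ?thesis using \<open>x = b\<close> Tb noloopH noloopG by simp
      next
        case 3 then show ?thesis using \<open>x = b\<close> Tb To h2 by auto
      qed
    next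
      case 3
      consider "y = a" | "y = b" | "y \<in> verts H - {a,b}" using y by blast
      then show ?thesis
      proof cases
        case 1 then show ?thesis using 3 Ta To h1[of x] by (auto simp: insert_commute)
      next
        case 2 then show ?thesis using 3 Tb To h2[of x] by (auto simp: insert_commute)
      next
        case 4: 3 then show ?thesis using 3 To h3 by auto
      qed
    qed
  qed
  have labT: "lab G x = ?T (lab H x)" if x: "x \<in> X" for x
  proof -
    let ?t = "lab H x"
    have t: "?t \<in> verts H" using lH x by blast
    have lG': "lab (contract G u v) x = \<psi> (lab (contract H a b) x)" using isom_lab[OF iso x] .
    consider "?t = a" | "?t = b" | "?t \<in> verts H - {a,b}" using t by blast
    then show ?thesis
    proof cases
      case 1 then show ?thesis using L x ab' \<psi>a by auto
    next
      case 2
      then have "lab (contract H a b) x = a" by (simp add: contract_simps)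
      then have "lab (contract G u v) x = u" using lG' \<psi>a by simp
      then have "lab G x = u \<or> lab G x = v" by (auto simp: contract_simps split: if_splits)
      moreover have "lab G x \<noteq> u" using L x 2 ab' by auto
      ultimately show ?thesis using 2 by simp
    next
      case 3
      then have "lab (contract H a b) x = ?t" by (simp add: contract_simps)
      then have e: "lab (contract G u v) x = \<psi> ?t" using lG' by simp
      have "\<psi> ?t \<noteq> u" "\<psi> ?t \<noteq> v" using pu[OF 3] pv[of ?t] 3 by auto
      then have "lab G x = \<psi> ?t" using e by (auto simp: contract_simps split: if_splits)
      then show ?thesis using 3 by simp
    qed
  qed
  show ?thesis unfolding isom_def using bijT edgesT labT by blast
qed

lemma delete_simps: "verts (delete G u v) = verts G" "edges (delete G u v) = edges G - {{u,v}}"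
  "lab (delete G u v) = lab G"
  by (simp_all add: delete_def)

lemma cover_step:
  assumes F: "is_xforest X F" and st: "one_step X F G" and iso: "xiso X w G"
    and w: "is_xforest X w" and cw: "connected_graph w"
  shows "\<exists>u v. u \<noteq> v \<and> {u,v} \<in> edges F \<and> G = contract F u v"
proof -
  obtain u v where uv: "u \<noteq> v" "{u,v} \<in> edges F" "G = contract F u v \<or> (safe_deletion X F u v \<and> G = delete F u v)"
    using st by (auto simp: one_step_def)
  have wF: "wf_graph F" using F by (rule xforest_wf)
  have "G \<noteq> delete F u v"
  proof
    assume G: "G = delete F u v"
    obtain f where f: "isom X w G f" using iso xiso_isom by blast
    have cG: "connected_graph G" using isom_connected[OF f xforest_wf[OF w] cw] .
    have "u \<in> verts G" "v \<in> verts G" using wf_edge2[OF wF uv(2)] G by (auto simp: delete_simps)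
    then have "(u,v) \<in> (adj (edges F - {{u,v}}))\<^sup>*" using cG G
      by (simp add: connected_graph_def adjrel_eq delete_simps)
    then show False using no_alt_path[OF wF xforest_acyclic[OF F] uv(2)] by blast
  qed
  then show ?thesis using uv by blast
qed

lemma w_connected:
  assumes T: "is_xtree X C" and ab: "{a,b} \<in> edges C" and iso: "xiso X w (contract C a b)"
    and w: "is_xforest X w"
  shows "connected_graph w"
proof -
  have wC: "wf_graph C" using T by (rule xtree_wf)
  have ab': "a \<noteq> b" "a \<in> verts C" using wf_edge2[OF wC ab] by auto
  have c: "connected_graph (contract C a b)" using contract_connected[OF wC ab xtree_connected[OF T]] .
  have "xiso X (contract C a b) w" using xiso_sym[OF xforest_lab[OF w] iso] .
  then obtain f where "isom X (contract C a b) w f" using xiso_isom by blast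
  then show ?thesis using isom_connected contract_wf[OF wC ab] c by blast
qed

lemma uncontract_xiso_either:
  assumes wH: "wf_graph H" and wG: "wf_graph G"
    and ab: "{a,b} \<in> edges H" and uv: "{u,v} \<in> edges G"
    and ncH: "nocommon H a b" and ncG: "nocommon G u v"
    and iso: "isom X (contract H a b) (contract G u v) \<psi>" and \<psi>a: "\<psi> a = u"
    and lH: "lab H ` X \<subseteq> verts H"
    and M: "(\<psi> ` (nbrs H a - {b}) = nbrs G u - {v} \<and> labels X H a = labels X G u) \<or>
            (\<psi> ` (nbrs H a - {b}) = nbrs G v - {u} \<and> labels X H a = labels X G v)"
  shows "xiso X H G"
  using M
proof
  assume m: "\<psi> ` (nbrs H a - {b}) = nbrs G u - {v} \<and> labels X H a = labels X G u"
  have L: "\<forall>x\<in>X. (lab H x = a \<longleftrightarrow> lab G x = u)"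
  proof
    fix x assume x: "x \<in> X"
    have "lab H x = a \<longleftrightarrow> x \<in> labels X H a" using x by (simp add: labels_def)
    also have "\<dots> \<longleftrightarrow> x \<in> labels X G u" using m by simp
    also have "\<dots> \<longleftrightarrow> lab G x = u" using x by (simp add: labels_def)
    finally show "lab H x = a \<longleftrightarrow> lab G x = u" .
  qed
  have "isom X H G (\<lambda>t. if t = b then v else \<psi> t)"
    using uncontract_iso[OF wH wG ab uv ncH ncG iso \<psi>a conjunct1[OF m] L lH] .
  then show ?thesis using xiso_isom by blast
next
  assume m: "\<psi> ` (nbrs H a - {b}) = nbrs G v - {u} \<and> labels X H a = labels X G v"
  have L: "\<forall>x\<in>X. (lab H x = a \<longleftrightarrow> lab G x = v)"
  proof
    fix x assume x: "x \<in> X"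
    have "lab H x = a \<longleftrightarrow> x \<in> labels X H a" using x by (simp add: labels_def)
    also have "\<dots> \<longleftrightarrow> x \<in> labels X G v" using m by simp
    also have "\<dots> \<longleftrightarrow> lab G x = v" using x by (simp add: labels_def)
    finally show "lab H x = a \<longleftrightarrow> lab G x = v" .
  qed
  let ?s = "\<lambda>x. if x = u then v else (x::nat)"
  have iso2: "isom X (contract H a b) (contract G v u) (?s \<circ> \<psi>)"
    using isom_trans[OF iso contract_swap[OF wG uv]] .
  have a2: "(?s \<circ> \<psi>) a = v" using \<psi>a by simp
  have uv2: "{v,u} \<in> edges G" using uv by (simp add: insert_commute)
  have nc2: "nocommon G v u" using ncG nocommon_sym by metis
  have N2: "(?s \<circ> \<psi>) ` (nbrs H a - {b}) = nbrs G v - {u}"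
  proof -
    have "(?s \<circ> \<psi>) ` (nbrs H a - {b}) = ?s ` (\<psi> ` (nbrs H a - {b}))" by (simp only: image_comp)
    also have "\<dots> = ?s ` (nbrs G v - {u})" by (simp only: conjunct1[OF m])
    also have "\<dots> = nbrs G v - {u}" by (auto simp: image_iff)
    finally show ?thesis .
  qed
  have "isom X H G (\<lambda>t. if t = b then u else (?s \<circ> \<psi>) t)"
    using uncontract_iso[OF wH wG ab uv2 ncH nc2 iso2 a2 N2 L lH] .
  then show ?thesis using xiso_isom by blast
qed

lemma leaf_nbrs_other:
  assumes wf: "wf_graph G" and ab: "{a,b} \<in> edges G" and nb: "nbrs G b = {a}"
  shows "nbrs (contract G a b) a = nbrs G a - {b}"
proof -
  have "a \<notin> nbrs G a" using wf_edge2[OF wf, of a a] by (auto simp: nbrs_iff)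
  then show ?thesis using contract_nbrs_u[OF wf ab] nb by auto
qed

lemma core_leaf:
  assumes C: "in_CX X C" and fin: "finite X" and X3: "card X \<ge> 3"
    and ab: "{a,b} \<in> edges C" and leaf: "deg C a = 1 \<or> deg C b = 1"
    and iso: "xiso X w (contract C a b)" and w: "is_xforest X w"
    and cov: "covers X w F"
  shows "xiso X F C"
proof -
  have T: "is_xtree X C" using C by (rule inCX_xtree)
  have wC: "wf_graph C" using T by (rule xtree_wf)
  have lC: "lab C ` X \<subseteq> verts C" using T by (rule xtree_lab)
  have B: "binary X C" using C by (rule inCX_binary)
  have ncC: "nocommon C a b" using acyclic_nocommon[OF wC xtree_acyclic[OF T] ab] .
  have ab': "a \<noteq> b" "a \<in> verts C" "b \<in> verts C" using wf_edge2[OF wC ab] by auto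
  have cw: "connected_graph w" using w_connected[OF T ab iso w] .
  have F: "is_xforest X F" using cov by (simp add: covers_def)
  obtain G1 where G1: "one_step X F G1" "xiso X w G1" using cov by (auto simp: covers_def)
  obtain u v where uv: "u \<noteq> v" "{u,v} \<in> edges F" "G1 = contract F u v"
    using cover_step[OF F G1 w cw] by blast
  have wF: "wf_graph F" using F by (rule xforest_wf)
  have lF: "lab F ` X \<subseteq> verts F" using F by (rule xforest_lab)
  have ncF: "nocommon F u v" using acyclic_nocommon[OF wF xforest_acyclic[OF F] uv(2)] .
  have "xiso X (contract C a b) w" using xiso_sym[OF xforest_lab[OF w] iso] .
  then have "xiso X (contract C a b) (contract F u v)" using G1(2) uv(3) xiso_trans by blast
  then obtain \<psi> where \<psi>: "isom X (contract C a b) (contract F u v) \<psi>" using xiso_isom by blast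
  have \<psi>a: "\<psi> a = u" using local_u[OF B wC lC ab ncC F uv(2) ncF \<psi> fin] .
  have wC': "wf_graph (contract C a b)" using contract_wf[OF wC ab] .
  have wF': "wf_graph (contract F u v)" using contract_wf[OF wF uv(2)] .
  have lC': "lab (contract C a b) ` X \<subseteq> verts (contract C a b)" using contract_lab_verts[OF lC ab'(2,1)] .
  have aC': "a \<in> verts (contract C a b)" using ab' by (simp add: contract_simps)
  have dd: "deg (contract F u v) u = deg (contract C a b) a" using isom_deg[OF \<psi> wC' wF' aC'] \<psi>a by simp
  have ll: "labels X (contract F u v) u = labels X (contract C a b) a" using isom_labels[OF \<psi> lC' aC'] \<psi>a by simp
  have nn: "nbrs (contract F u v) u = \<psi> ` nbrs (contract C a b) a" using isom_nbrs[OF \<psi> wC' wF' aC'] \<psi>a by simp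
  have dsC: "deg (contract C a b) a + 2 = deg C a + deg C b" using contract_deg_u[OF wC ab ncC] .
  have dsF: "deg (contract F u v) u + 2 = deg F u + deg F v" using contract_deg_u[OF wF uv(2) ncF] .
  have lsC: "labels X (contract C a b) a = labels X C a \<union> labels X C b" by (rule contract_labels_u)
  have lsF: "labels X (contract F u v) u = labels X F u \<union> labels X F v" by (rule contract_labels_u)
  have uvF: "u \<in> verts F" "v \<in> verts F" using wf_edge2[OF wF uv(2)] by auto
  have duF: "deg F u \<ge> 1" using deg_pos[OF wF uv(2)] .
  have dvF: "deg F v \<ge> 1" using deg_pos[OF wF, of v u] uv(2) by (simp add: insert_commute)
  have not2: "\<not> (deg C a = 1 \<and> deg C b = 1)" using two_leaves[OF C ab] X3 by auto
  have Cstr: "(deg C a = 1 \<and> card (labels X C a) = 1 \<and> deg C b = 3 \<and> labels X C b = {}) \<or>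
              (deg C b = 1 \<and> card (labels X C b) = 1 \<and> deg C a = 3 \<and> labels X C a = {})"
    using B ab' leaf not2 unfolding binary_def by fastforce
  have sum4: "deg F u + deg F v = 4" using Cstr dd dsC dsF by auto
  have lab1: "card (labels X F u \<union> labels X F v) = 1" using Cstr ll lsC lsF by auto
  have cu: "card (labels X F u \<union> labels X F v) = card (labels X F u) + card (labels X F v)"
    by (rule card_Un_disjoint) (use labels_finite[OF fin] labels_disj[OF uv(1), of X F] in auto)
  have Fstr: "(deg F u = 1 \<and> labels X F v = {} \<and> deg F v = 3) \<or> (deg F v = 1 \<and> labels X F u = {} \<and> deg F u = 3)"
  proof -
    have "labels X F u = {} \<or> labels X F v = {}"
    proof (rule ccontr)
      assume "\<not> (labels X F u = {} \<or> labels X F v = {})"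
      then have "card (labels X F u) \<ge> 1" "card (labels X F v) \<ge> 1"
        using labels_finite[OF fin] by (simp_all add: Suc_leI card_gt_0_iff)
      then show False using lab1 cu by linarith
    qed
    then show ?thesis
    proof
      assume "labels X F u = {}"
      then have "deg F u \<ge> 3" using xforest_deg[OF F uvF(1)] by simp
      then show ?thesis using sum4 dvF \<open>labels X F u = {}\<close> by auto
    next
      assume "labels X F v = {}"
      then have "deg F v \<ge> 3" using xforest_deg[OF F uvF(2)] by simp
      then show ?thesis using sum4 duF \<open>labels X F v = {}\<close> by auto
    qed
  qed
  have nbC: "nbrs C b - {a} = {} \<or> nbrs C a - {b} = {}" using Cstr deg1_nbrs[OF wC ab] deg1_nbrs[OF wC, of b a] ab
    by (auto simp: insert_commute)
  have M: "(\<psi> ` (nbrs C a - {b}) = nbrs F u - {v} \<and> labels X C a = labels X F u) \<or>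
           (\<psi> ` (nbrs C a - {b}) = nbrs F v - {u} \<and> labels X C a = labels X F v)"
  proof -
    have nFu: "deg F u = 1 \<Longrightarrow> nbrs F u = {v}" using deg1_nbrs[OF wF uv(2)] by simp
    have nFv: "deg F v = 1 \<Longrightarrow> nbrs F v = {u}" using deg1_nbrs[OF wF, of v u] uv(2) by (simp add: insert_commute)
    have nCa: "deg C a = 1 \<Longrightarrow> nbrs C a = {b}" using deg1_nbrs[OF wC ab] by simp
    have nCb: "deg C b = 1 \<Longrightarrow> nbrs C b = {a}" using deg1_nbrs[OF wC, of b a] ab by (simp add: insert_commute)
    from Cstr show ?thesis
    proof
      assume c: "deg C a = 1 \<and> card (labels X C a) = 1 \<and> deg C b = 3 \<and> labels X C b = {}"
      have la: "labels X C a = labels X F u \<union> labels X F v" using c ll lsC lsF by auto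
      from Fstr show ?thesis
      proof
        assume f: "deg F u = 1 \<and> labels X F v = {} \<and> deg F v = 3"
        then show ?thesis using nFu nCa c la by auto
      next
        assume f: "deg F v = 1 \<and> labels X F u = {} \<and> deg F u = 3"
        then show ?thesis using nFv nCa c la by auto
      qed
    next
      assume c: "deg C b = 1 \<and> card (labels X C b) = 1 \<and> deg C a = 3 \<and> labels X C a = {}"
      have na: "\<psi> ` (nbrs C a - {b}) = nbrs (contract F u v) u"
        using nn leaf_nbrs_other[OF wC ab] nCb c by simp
      from Fstr show ?thesis
      proof
        assume f: "deg F u = 1 \<and> labels X F v = {} \<and> deg F v = 3"
        have "nbrs (contract F u v) u = nbrs F v - {u}"
          using contract_nbrs_u[OF wF uv(2)] nFu f wf_edge2[OF wF, of v v] by (auto simp: nbrs_iff)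
        then show ?thesis using na c f by auto
      next
        assume f: "deg F v = 1 \<and> labels X F u = {} \<and> deg F u = 3"
        have "nbrs (contract F u v) u = nbrs F u - {v}"
          using contract_nbrs_u[OF wF uv(2)] nFv f wf_edge2[OF wF, of u u] by (auto simp: nbrs_iff)
        then show ?thesis using na c f by auto
      qed
    qed
  qed
  have "xiso X C F" using uncontract_xiso_either[OF wC wF ab uv(2) ncC ncF \<psi> \<psi>a lC M] .
  then show ?thesis using xiso_sym[OF lC] by blast
qed

definition sepset :: "'x xgraph \<Rightarrow> nat \<Rightarrow> nat \<Rightarrow> nat set" where
  "sepset G p q = {t. (p,t) \<in> (adj (edges G - {{p,q}}))\<^sup>*}"

lemma sepset_closed:
  assumes e: "{r,s} \<in> edges G" "{r,s} \<noteq> {p,q}"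
  shows "r \<in> sepset G p q \<longleftrightarrow> s \<in> sepset G p q"
proof -
  have "(r,s) \<in> adj (edges G - {{p,q}})" "(s,r) \<in> adj (edges G - {{p,q}})"
    using e by (auto simp: insert_commute)
  then show ?thesis unfolding sepset_def mem_Collect_eq
  proof -
    assume h: "(r,s) \<in> adj (edges G - {{p,q}})" "(s,r) \<in> adj (edges G - {{p,q}})"
    show "(p, r) \<in> (adj (edges G - {{p, q}}))\<^sup>* \<longleftrightarrow> (p, s) \<in> (adj (edges G - {{p, q}}))\<^sup>*"
    proof
      assume "(p, r) \<in> (adj (edges G - {{p, q}}))\<^sup>*"
      then show "(p, s) \<in> (adj (edges G - {{p, q}}))\<^sup>*" using h(1) by (rule rtrancl_into_rtrancl)
    next
      assume "(p, s) \<in> (adj (edges G - {{p, q}}))\<^sup>*"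
      then show "(p, r) \<in> (adj (edges G - {{p, q}}))\<^sup>*" using h(2) by (rule rtrancl_into_rtrancl)
    qed
  qed
qed

lemma sepset_in: "p \<in> sepset G p q" by (simp add: sepset_def)

lemma sepset_out:
  assumes wf: "wf_graph G" and ac: "acyclic_graph G" and pq: "{p,q} \<in> edges G"
  shows "q \<notin> sepset G p q"
  unfolding sepset_def using no_alt_path[OF wf ac pq] by blast

lemma acyclic_of_sep:
  assumes wf: "wf_graph G"
    and S: "\<And>p q. {p,q} \<in> edges G \<Longrightarrow> \<exists>S. (p \<in> S \<longleftrightarrow> q \<notin> S) \<and>
              (\<forall>r s. {r,s} \<in> edges G \<longrightarrow> {r,s} \<noteq> {p,q} \<longrightarrow> (r \<in> S \<longleftrightarrow> s \<in> S))"
  shows "acyclic_graph G"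
  unfolding acyclic_graph_def
proof
  assume "\<exists>vs. 3 \<le> length vs \<and> distinct vs \<and> set vs \<subseteq> verts G \<and>
      (\<forall>i<length vs. {vs ! i, vs ! ((i + 1) mod length vs)} \<in> edges G)"
  then obtain vs where vs: "3 \<le> length vs" "distinct vs"
      "\<forall>i<length vs. {vs ! i, vs ! ((i + 1) mod length vs)} \<in> edges G" by blast
  let ?n = "length vs"
  have e: "{vs!i, vs!Suc i} \<in> edges G" if "Suc i < ?n" for i
    using vs(3) that by (metis Suc_eq_plus1 Suc_lessD mod_less)
  have el: "{vs!(?n - 1), vs!0} \<in> edges G"
  proof -
    have "?n - 1 + 1 = ?n" using vs(1) by simp
    then have "?n - 1 < ?n" "(?n - 1 + 1) mod ?n = 0" by simp_all
    then show ?thesis using vs(3) by metis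
  qed
  have e01: "{vs!0, vs!1} \<in> edges G" using e[of 0] vs(1) by simp
  from S[OF e01] obtain S where S1: "vs!0 \<in> S \<longleftrightarrow> vs!1 \<notin> S"
    and S2: "\<forall>r s. {r,s} \<in> edges G \<longrightarrow> {r,s} \<noteq> {vs!0, vs!1} \<longrightarrow> (r \<in> S \<longleftrightarrow> s \<in> S)"
    by (elim exE conjE)
  have neq: "{vs!i, vs!j} \<noteq> {vs!0, vs!1}" if "i < ?n" "j < ?n" "i \<noteq> 0" "i \<noteq> 1" for i j
  proof
    assume "{vs!i, vs!j} = {vs!0, vs!1}"
    then have "vs!i = vs!0 \<or> vs!i = vs!1" by auto
    moreover have "0 < ?n" "1 < ?n" using vs(1) by auto
    ultimately show False using nth_eq_iff_index_eq[OF vs(2) that(1), of 0] nth_eq_iff_index_eq[OF vs(2) that(1), of 1] that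
      by auto
  qed
  have inv: "vs!i \<in> S \<longleftrightarrow> vs!1 \<in> S" if "1 \<le> i" "i < ?n" for i
    using that
  proof (induction i)
    case 0 then show ?case by simp
  next
    case (Suc i)
    show ?case
    proof (cases "i = 0")
      case True then show ?thesis by simp
    next
      case False
      then have ih: "vs!i \<in> S \<longleftrightarrow> vs!1 \<in> S" using Suc by simp
      have "{vs!Suc i, vs!i} \<in> edges G" using e[of i] Suc.prems by (simp add: insert_commute)
      moreover have "{vs!Suc i, vs!i} \<noteq> {vs!0, vs!1}" using neq[of "Suc i" i] Suc.prems False by simp
      ultimately show ?thesis using S2 ih by blast
    qed
  qed
  have "?n - 1 < ?n" "0 < ?n" "?n - 1 \<noteq> 0" "?n - 1 \<noteq> 1" using vs(1) by auto
  then have "{vs!(?n - 1), vs!0} \<noteq> {vs!0, vs!1}" using neq[of "?n - 1" 0] by blast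
  then have "vs!(?n - 1) \<in> S \<longleftrightarrow> vs!0 \<in> S" using S2 el by blast
  moreover have "vs!(?n - 1) \<in> S \<longleftrightarrow> vs!1 \<in> S" using inv[of "?n - 1"] vs(1) by simp
  ultimately show False using S1 by blast
qed

lemma gen_A: "w \<notin> J \<Longrightarrow> (E - K \<union> J) - {w} = (E - {w} - K) \<union> J" by blast
lemma gen_B: "x \<in> E \<Longrightarrow> y \<in> E \<Longrightarrow> E = (E - {x,y}) \<union> {x,y}" by blast
lemma gen_img: "g x = g x' \<Longrightarrow> g y = g y' \<Longrightarrow> g ` (E \<union> {x,y}) = g ` (E \<union> {y',x'})" by auto
lemma gen_cases4: "z \<in> (E - {x1,x2}) \<union> {y1,y2} \<Longrightarrow> (z = w \<Longrightarrow> P) \<Longrightarrow> (z = y1 \<Longrightarrow> P) \<Longrightarrow> (z = y2 \<Longrightarrow> P)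
  \<Longrightarrow> (z \<in> E \<Longrightarrow> z \<noteq> w \<Longrightarrow> z \<noteq> x1 \<Longrightarrow> z \<noteq> x2 \<Longrightarrow> P) \<Longrightarrow> P" by blast
lemma gen_cases3: "z \<in> (E - {x1,x2}) \<union> {y1,y2} \<Longrightarrow> (z = y1 \<Longrightarrow> P) \<Longrightarrow> (z = y2 \<Longrightarrow> P)
  \<Longrightarrow> (z \<in> E \<Longrightarrow> z \<noteq> x1 \<Longrightarrow> z \<noteq> x2 \<Longrightarrow> P) \<Longrightarrow> P" by blast

lemma nni_simps:
  "verts (nni_swap C a \<beta> b \<gamma>) = verts C" "lab (nni_swap C a \<beta> b \<gamma>) = lab C"
  "edges (nni_swap C a \<beta> b \<gamma>) = (edges C - {{a,\<beta>},{b,\<gamma>}}) \<union> {{a,\<gamma>},{b,\<beta>}}"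
  by (simp_all add: nni_swap_def)

locale nni_setting =
  fixes C :: "'x xgraph" and a b \<beta> \<gamma> :: nat
  assumes wf: "wf_graph C" and ac: "acyclic_graph C" and ab: "{a,b} \<in> edges C"
    and a\<beta>: "{a,\<beta>} \<in> edges C" and \<beta>b: "\<beta> \<noteq> b"
    and b\<gamma>: "{b,\<gamma>} \<in> edges C" and \<gamma>a: "\<gamma> \<noteq> a"
begin

abbreviation "N \<equiv> nni_swap C a \<beta> b \<gamma>"

lemma ncab: "nocommon C a b" using acyclic_nocommon[OF wf ac ab] .

lemma dist: "a \<noteq> b" "a \<noteq> \<beta>" "b \<noteq> \<gamma>" "\<beta> \<noteq> \<gamma>" "a \<in> verts C" "b \<in> verts C" "\<beta> \<in> verts C" "\<gamma> \<in> verts C"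
  "{a,\<gamma>} \<notin> edges C" "{b,\<beta>} \<notin> edges C"
proof -
  show "a \<noteq> b" "a \<in> verts C" "b \<in> verts C" using wf_edge2[OF wf ab] by auto
  show "a \<noteq> \<beta>" "\<beta> \<in> verts C" using wf_edge2[OF wf a\<beta>] by auto
  show "b \<noteq> \<gamma>" "\<gamma> \<in> verts C" using wf_edge2[OF wf b\<gamma>] by auto
  show "{a,\<gamma>} \<notin> edges C" using ncab b\<gamma> unfolding nocommon_def by blast
  show "{b,\<beta>} \<notin> edges C" using ncab a\<beta> unfolding nocommon_def by blast
  show "\<beta> \<noteq> \<gamma>"
  proof
    assume "\<beta> = \<gamma>" then show False using ncab a\<beta> b\<gamma> unfolding nocommon_def by blast
  qed
qed

lemma N_wf: "wf_graph N"
  unfolding wf_graph_def nni_simps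
proof (rule conjI)
  show "finite (verts C)" using wf by (simp add: wf_graph_def)
next
  show "\<forall>e\<in>edges C - {{a, \<beta>}, {b, \<gamma>}} \<union> {{a, \<gamma>}, {b, \<beta>}}. e \<subseteq> verts C \<and> card e = 2"
  proof
  fix e assume "e \<in> edges C - {{a, \<beta>}, {b, \<gamma>}} \<union> {{a, \<gamma>}, {b, \<beta>}}"
  then consider "e \<in> edges C" | "e = {a,\<gamma>}" | "e = {b,\<beta>}" by blast
  then show "e \<subseteq> verts C \<and> card e = 2"
  proof cases
    case 1 then show ?thesis using wf by (simp add: wf_graph_def)
  next
    case 2 then show ?thesis using dist(5,8) \<gamma>a by simp
  next
    case 3 then show ?thesis using dist(6,7) \<beta>b by simp
  qed
  qed
qed

lemma N_ab: "{a,b} \<in> edges N"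
  using ab dist \<beta>b \<gamma>a by (auto simp: nni_simps doubleton_eq_iff)

lemma N_nbrs_a: "nbrs N a = (nbrs C a - {\<beta>}) \<union> {\<gamma>}"
  using dist \<beta>b \<gamma>a by (auto simp: nbrs_iff nni_simps doubleton_eq_iff)

lemma N_nbrs_b: "nbrs N b = (nbrs C b - {\<gamma>}) \<union> {\<beta>}"
  using dist \<beta>b \<gamma>a by (auto simp: nbrs_iff nni_simps doubleton_eq_iff)

lemma N_contract: "contract N a b = contract C a b"
proof -
  let ?m = "\<lambda>x. if x = b then a else (x::nat)"
  have e1: "?m ` {a,\<gamma>} = ?m ` {b,\<gamma>}" "?m ` {b,\<beta>} = ?m ` {a,\<beta>}" using dist \<beta>b \<gamma>a by auto
  have "(\<lambda>e. ?m ` e) ` (edges N - {{a,b}}) = (\<lambda>e. ?m ` e) ` (edges C - {{a,b}})"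
  proof -
    have n1: "{a,\<gamma>} \<noteq> {a,b}" "{b,\<beta>} \<noteq> {a,b}" "{a,\<beta>} \<noteq> {a,b}" "{b,\<gamma>} \<noteq> {a,b}"
      using dist \<gamma>a \<beta>b by (auto simp: doubleton_eq_iff)
    have A: "edges N - {{a,b}} = (edges C - {{a,b}} - {{a,\<beta>},{b,\<gamma>}}) \<union> {{a,\<gamma>},{b,\<beta>}}"
      unfolding nni_simps by (rule gen_A) (use n1 in simp)
    have B: "edges C - {{a,b}} = (edges C - {{a,b}} - {{a,\<beta>},{b,\<gamma>}}) \<union> {{a,\<beta>},{b,\<gamma>}}"
      by (rule gen_B) (use a\<beta> b\<gamma> n1 in simp_all)
    show ?thesis unfolding A by (subst B) (rule gen_img[of "\<lambda>e. ?m ` e" "{a,\<gamma>}" "{b,\<gamma>}" "{b,\<beta>}" "{a,\<beta>}", OF e1])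
  qed
  then show ?thesis unfolding contract_def Let_def by (simp add: nni_simps)
qed

lemma N_nocommon: "nocommon N a b"
  unfolding nocommon_def
proof (intro allI notI)
  fix t assume h: "{a,t} \<in> edges N \<and> {b,t} \<in> edges N"
  then have "t \<in> nbrs N a" "t \<in> nbrs N b" by (auto simp: nbrs_iff)
  then have "t \<in> (nbrs C a - {\<beta>}) \<union> {\<gamma>}" "t \<in> (nbrs C b - {\<gamma>}) \<union> {\<beta>}"
    using N_nbrs_a N_nbrs_b by auto
  then show False using ncab dist a\<beta> b\<gamma> by (auto simp: nocommon_def nbrs_iff)
qed

lemma N_deg: assumes t: "t \<in> verts C" shows "deg N t = deg C t"
proof -
  have fa: "finite (nbrs C a)" "finite (nbrs C b)" using nbrs_finite[OF wf] by auto
  consider "t = a" | "t = b" | "t \<notin> {a,b}" by blast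
  then show ?thesis
  proof cases
    case 1
    have "\<beta> \<in> nbrs C a" "\<gamma> \<notin> nbrs C a" using a\<beta> dist by (auto simp: nbrs_iff)
    then have "card ((nbrs C a - {\<beta>}) \<union> {\<gamma>}) = card (nbrs C a)"
      using card_minus1[OF fa(1)] fa(1) by (simp add: card_insert_disjoint)
    then show ?thesis using 1 N_nbrs_a by (simp add: deg_nbrs[OF wf] deg_nbrs[OF N_wf])
  next
    case 2
    have "\<gamma> \<in> nbrs C b" "\<beta> \<notin> nbrs C b" using b\<gamma> dist by (auto simp: nbrs_iff insert_commute)
    then have "card ((nbrs C b - {\<gamma>}) \<union> {\<beta>}) = card (nbrs C b)"
      using card_minus1[OF fa(2)] fa(2) by (simp add: card_insert_disjoint)
    then show ?thesis using 2 N_nbrs_b by (simp add: deg_nbrs[OF wf] deg_nbrs[OF N_wf])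
  next
    case 3
    have "deg N t = deg (contract N a b) t" using contract_deg_t[OF N_wf N_ab 3 N_nocommon] by simp
    also have "\<dots> = deg (contract C a b) t" using N_contract by simp
    also have "\<dots> = deg C t" using contract_deg_t[OF wf ab 3 ncab] .
    finally show ?thesis .
  qed
qed

lemma N_labels: "labels X N t = labels X C t"
  by (simp add: labels_def nni_simps)

lemma N_acyclic: "acyclic_graph N"
proof (rule acyclic_of_sep[OF N_wf])
  fix p q assume pq: "{p,q} \<in> edges N"
  let ?S1 = "sepset C a b" and ?S2 = "sepset C \<beta> a" and ?S3 = "sepset C \<gamma> b"
  have ba: "{\<beta>,a} \<in> edges C" using a\<beta> by (simp add: insert_commute)
  have gb: "{\<gamma>,b} \<in> edges C" using b\<gamma> by (simp add: insert_commute)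
  have cl: "\<And>r s p q. {r,s} \<in> edges C \<Longrightarrow> {r,s} \<noteq> {p,q} \<Longrightarrow> (r \<in> sepset C p q \<longleftrightarrow> s \<in> sepset C p q)"
    by (rule sepset_closed)
  have m1: "a \<in> ?S1" "b \<notin> ?S1" using sepset_in sepset_out[OF wf ac ab] by auto
  have m2: "\<beta> \<in> ?S2" "a \<notin> ?S2" using sepset_in sepset_out[OF wf ac ba] by auto
  have m3: "\<gamma> \<in> ?S3" "b \<notin> ?S3" using sepset_in sepset_out[OF wf ac gb] by auto
  have d: "{a,b} \<noteq> {\<beta>,a}" "{a,b} \<noteq> {\<gamma>,b}" "{b,\<gamma>} \<noteq> {a,b}" "{b,\<gamma>} \<noteq> {\<beta>,a}" "{a,\<beta>} \<noteq> {a,b}"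
     "{a,\<beta>} \<noteq> {\<gamma>,b}"
    using dist \<beta>b \<gamma>a by (auto simp: doubleton_eq_iff)
  have b2: "b \<notin> ?S2" using cl[OF ab d(1)] m2 by simp
  have a3: "a \<notin> ?S3" using cl[OF ab d(2)] m3 by simp
  have g1: "\<gamma> \<notin> ?S1" using cl[OF b\<gamma> d(3)] m1 by simp
  have g2: "\<gamma> \<notin> ?S2" using cl[OF b\<gamma> d(4)] b2 by simp
  have be1: "\<beta> \<in> ?S1" using cl[OF a\<beta> d(5)] m1 by simp
  have be3: "\<beta> \<notin> ?S3" using cl[OF a\<beta> d(6)] a3 by simp
  have EN: "edges N = (edges C - {{a,\<beta>},{b,\<gamma>}}) \<union> {{a,\<gamma>},{b,\<beta>}}" by (rule nni_simps)
  have pq': "{p,q} \<in> (edges C - {{a,\<beta>},{b,\<gamma>}}) \<union> {{a,\<gamma>},{b,\<beta>}}" using pq EN by simp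
  consider "{p,q} = {a,b}" | "{p,q} = {a,\<gamma>}" | "{p,q} = {b,\<beta>}"
    | "{p,q} \<in> edges C" "{p,q} \<noteq> {a,b}" "{p,q} \<noteq> {a,\<beta>}" "{p,q} \<noteq> {b,\<gamma>}"
    using gen_cases4[OF pq'] by metis
  then show "\<exists>S. (p \<in> S \<longleftrightarrow> q \<notin> S) \<and> (\<forall>r s. {r,s} \<in> edges N \<longrightarrow> {r,s} \<noteq> {p,q} \<longrightarrow> (r \<in> S \<longleftrightarrow> s \<in> S))"
  proof cases
    case 1
    let ?S = "{t. (t \<in> ?S1) \<noteq> ((t \<in> ?S2) \<noteq> (t \<in> ?S3))}"
    have "p \<in> ?S \<longleftrightarrow> q \<notin> ?S"
    proof -
      have "a \<in> ?S" "b \<notin> ?S" using m1 m2 m3 b2 a3 by auto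
      then show ?thesis using 1 by (auto simp: doubleton_eq_iff)
    qed
    moreover have "\<forall>r s. {r,s} \<in> edges N \<longrightarrow> {r,s} \<noteq> {p,q} \<longrightarrow> (r \<in> ?S \<longleftrightarrow> s \<in> ?S)"
    proof (intro allI impI)
      fix r s assume rs: "{r,s} \<in> edges N" "{r,s} \<noteq> {p,q}"
      have rs': "{r,s} \<in> (edges C - {{a,\<beta>},{b,\<gamma>}}) \<union> {{a,\<gamma>},{b,\<beta>}}" using rs EN by simp
      consider "{r,s} = {a,\<gamma>}" | "{r,s} = {b,\<beta>}" | "{r,s} \<in> edges C" "{r,s} \<noteq> {a,\<beta>}" "{r,s} \<noteq> {b,\<gamma>}"
        using gen_cases3[OF rs'] by metis
      then show "r \<in> ?S \<longleftrightarrow> s \<in> ?S"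
      proof cases
        case 1
        have "a \<in> ?S" "\<gamma> \<in> ?S" using m1 m2 m3 a3 g1 g2 by auto
        then show ?thesis using 1 by (auto simp: doubleton_eq_iff)
      next
        case 2
        have "b \<notin> ?S" "\<beta> \<notin> ?S" using m1 m2 m3 b2 be1 be3 by auto
        then show ?thesis using 2 by (auto simp: doubleton_eq_iff)
      next
        case 3
        have x1: "{r,s} \<noteq> {a,b}" using rs 1 by simp
        have x2: "{r,s} \<noteq> {\<beta>,a}" using 3 by (simp add: insert_commute)
        have x3: "{r,s} \<noteq> {\<gamma>,b}" using 3 by (simp add: insert_commute)
        show ?thesis using cl[OF 3(1) x1] cl[OF 3(1) x2] cl[OF 3(1) x3] by simp
      qed
    qed
    ultimately show ?thesis by (intro exI[of _ ?S] conjI)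
  next
    case 2
    have "p \<in> ?S3 \<longleftrightarrow> q \<notin> ?S3" using 2 m3 a3 by (auto simp: doubleton_eq_iff)
    moreover have "\<forall>r s. {r,s} \<in> edges N \<longrightarrow> {r,s} \<noteq> {p,q} \<longrightarrow> (r \<in> ?S3 \<longleftrightarrow> s \<in> ?S3)"
    proof (intro allI impI)
      fix r s assume rs: "{r,s} \<in> edges N" "{r,s} \<noteq> {p,q}"
      have rs': "{r,s} \<in> (edges C - {{a,\<beta>},{b,\<gamma>}}) \<union> {{a,\<gamma>},{b,\<beta>}}" using rs EN by simp
      consider "{r,s} = {b,\<beta>}" | "{r,s} \<in> edges C" "{r,s} \<noteq> {b,\<gamma>}"
        using gen_cases3[OF rs'] rs(2) 2 by metis
      then show "r \<in> ?S3 \<longleftrightarrow> s \<in> ?S3"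
      proof cases
        case 1 then show ?thesis using m3 be3 by (auto simp: doubleton_eq_iff)
      next
        case 2
        have "{r,s} \<noteq> {\<gamma>,b}" using 2 by (simp add: insert_commute)
        then show ?thesis using cl[OF 2(1)] by simp
      qed
    qed
    ultimately show ?thesis by (intro exI[of _ ?S3] conjI)
  next
    case 3
    have "p \<in> ?S2 \<longleftrightarrow> q \<notin> ?S2" using 3 m2 b2 by (auto simp: doubleton_eq_iff)
    moreover have "\<forall>r s. {r,s} \<in> edges N \<longrightarrow> {r,s} \<noteq> {p,q} \<longrightarrow> (r \<in> ?S2 \<longleftrightarrow> s \<in> ?S2)"
    proof (intro allI impI)
      fix r s assume rs: "{r,s} \<in> edges N" "{r,s} \<noteq> {p,q}"
      have rs': "{r,s} \<in> (edges C - {{a,\<beta>},{b,\<gamma>}}) \<union> {{a,\<gamma>},{b,\<beta>}}" using rs EN by simp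
      consider "{r,s} = {a,\<gamma>}" | "{r,s} \<in> edges C" "{r,s} \<noteq> {a,\<beta>}"
        using gen_cases3[OF rs'] rs(2) 3 by metis
      then show "r \<in> ?S2 \<longleftrightarrow> s \<in> ?S2"
      proof cases
        case 1 then show ?thesis using m2 g2 by (auto simp: doubleton_eq_iff)
      next
        case 2
        have "{r,s} \<noteq> {\<beta>,a}" using 2 by (simp add: insert_commute)
        then show ?thesis using cl[OF 2(1)] by simp
      qed
    qed
    ultimately show ?thesis by (intro exI[of _ ?S2] conjI)
  next
    case 4
    let ?S = "sepset C p q"
    have "p \<in> ?S \<longleftrightarrow> q \<notin> ?S" using sepset_in sepset_out[OF wf ac 4(1)] by auto
    moreover have "\<forall>r s. {r,s} \<in> edges N \<longrightarrow> {r,s} \<noteq> {p,q} \<longrightarrow> (r \<in> ?S \<longleftrightarrow> s \<in> ?S)"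
    proof (intro allI impI)
      fix r s assume rs: "{r,s} \<in> edges N" "{r,s} \<noteq> {p,q}"
      have y1: "{a,b} \<noteq> {p,q}" "{b,\<gamma>} \<noteq> {p,q}" "{a,\<beta>} \<noteq> {p,q}" using 4 by auto
      have rs': "{r,s} \<in> (edges C - {{a,\<beta>},{b,\<gamma>}}) \<union> {{a,\<gamma>},{b,\<beta>}}" using rs EN by simp
      consider "{r,s} = {a,\<gamma>}" | "{r,s} = {b,\<beta>}" | "{r,s} \<in> edges C"
        using gen_cases3[OF rs'] by metis
      then show "r \<in> ?S \<longleftrightarrow> s \<in> ?S"
      proof cases
        case 1
        have "a \<in> ?S \<longleftrightarrow> b \<in> ?S" "b \<in> ?S \<longleftrightarrow> \<gamma> \<in> ?S" using cl[OF ab y1(1)] cl[OF b\<gamma> y1(2)] by auto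
        then show ?thesis using 1 by (auto simp: doubleton_eq_iff)
      next
        case 2
        have "a \<in> ?S \<longleftrightarrow> b \<in> ?S" "a \<in> ?S \<longleftrightarrow> \<beta> \<in> ?S" using cl[OF ab y1(1)] cl[OF a\<beta> y1(3)] by auto
        then show ?thesis using 2 by (auto simp: doubleton_eq_iff)
      next
        case 3 then show ?thesis using cl[OF 3 rs(2)] by simp
      qed
    qed
    ultimately show ?thesis by (intro exI[of _ ?S] conjI)
  qed
qed

end

lemma xtree_xforest:
  assumes T: "is_xtree X G" and X: "X \<noteq> {}"
  shows "is_xforest X G"
proof -
  have wf: "wf_graph G" using T by (rule xtree_wf)
  have lv: "lab G ` X \<subseteq> verts G" using T by (rule xtree_lab)
  have c: "connected_graph G" using T by (rule xtree_connected)
  have ne: "verts G \<noteq> {}" using T by (simp add: is_xtree_def is_tree_def)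
  let ?R = "{(u, v). u \<in> verts G \<and> v \<in> verts G \<and> (u, v) \<in> (adjrel G)\<^sup>*}"
  have Rx: "?R `` {x} = verts G" if "x \<in> verts G" for x
    using that c by (auto simp: connected_graph_def)
  have comp: "components G = {verts G}"
    unfolding components_def quotient_def using Rx ne by auto
  have ind: "induced G (verts G) = G"
  proof -
    have "{e \<in> edges G. e \<subseteq> verts G} = edges G" using wf by (auto simp: wf_graph_def)
    then show ?thesis by (simp add: induced_def)
  qed
  have blk: "{x \<in> X. lab G x \<in> verts G} = X" using lv by auto
  show ?thesis unfolding is_xforest_def comp using wf lv T X blk ind by simp
qed

context nni_setting
begin

lemma N_binary: "binary X C \<Longrightarrow> binary X N"
  unfolding binary_def using N_deg N_labels by (simp add: nni_simps)

lemma N_connected: "connected_graph C \<Longrightarrow> connected_graph N"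
  using uncontract_connected[OF N_wf N_ab] N_contract contract_connected[OF wf ab] by simp

lemma N_inCX:
  assumes C: "in_CX X C" shows "in_CX X N"
proof -
  have T: "is_xtree X C" using C by (rule inCX_xtree)
  have TN: "is_xtree X N"
    unfolding is_xtree_def is_tree_def
  proof (intro conjI ballI impI)
    show "wf_graph N" by (rule N_wf)
    show "verts N \<noteq> {}" using dist by (auto simp: nni_simps)
    show "connected_graph N" using N_connected xtree_connected[OF T] by simp
    show "acyclic_graph N" by (rule N_acyclic)
    show "lab N ` X \<subseteq> verts N" using xtree_lab[OF T] by (simp add: nni_simps)
  next
    fix v assume v: "v \<in> verts N" "\<not> labeled X N v"
    then have "v \<in> verts C" "\<not> labeled X C v" by (auto simp: nni_simps labeled_def)
    then have "deg C v \<ge> 3" using T by (simp add: is_xtree_def)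
    then show "deg N v \<ge> 3" using N_deg \<open>v \<in> verts C\<close> by simp
  qed
  show ?thesis using binary_inCX[OF TN N_binary[OF inCX_binary[OF C]]] .
qed

end

definition AE :: "'x xgraph \<Rightarrow> nat \<Rightarrow> nat \<Rightarrow> nat set set" where
  "AE G a b = {e \<in> edges G. a \<notin> e \<and> b \<notin> e}"

definition region :: "nat set set \<Rightarrow> nat \<Rightarrow> nat set" where
  "region E p = {t. (p,t) \<in> (adj E)\<^sup>*}"

lemma (in nni_setting) AE_N: "AE N a b = AE C a b"
proof (rule set_eqI)
  fix e
  show "e \<in> AE N a b \<longleftrightarrow> e \<in> AE C a b"
  proof (cases "a \<notin> e \<and> b \<notin> e")
    case True
    then have "e \<noteq> {a,\<beta>}" "e \<noteq> {b,\<gamma>}" "e \<noteq> {a,\<gamma>}" "e \<noteq> {b,\<beta>}" by auto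
    then show ?thesis using True by (simp add: AE_def nni_simps)
  next
    case False then show ?thesis by (auto simp: AE_def)
  qed
qed

lemma AE_sub: "AE G a b \<subseteq> edges G" by (auto simp: AE_def)

lemma AE_sym: "AE G b a = AE G a b" by (auto simp: AE_def)

lemma region_in: "p \<in> region E p" by (simp add: region_def)

lemma region_trans: "q \<in> region E p \<Longrightarrow> t \<in> region E q \<Longrightarrow> t \<in> region E p"
  unfolding region_def by (simp add: rtrancl_trans)

lemma region_meet: "t \<in> region E p \<Longrightarrow> t \<in> region E q \<Longrightarrow> q \<in> region E p"
proof -
  assume "t \<in> region E p" "t \<in> region E q"
  then have "(p,t) \<in> (adj E)\<^sup>*" "(q,t) \<in> (adj E)\<^sup>*" by (auto simp: region_def)
  then have "(p,t) \<in> (adj E)\<^sup>*" "(t,q) \<in> (adj E)\<^sup>*" using adj_sym by auto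
  then show ?thesis unfolding region_def by (simp add: rtrancl_trans)
qed

lemma region_AE_notin:
  assumes "t \<in> region (AE G a b) p" "p \<notin> {a,b}" shows "t \<notin> {a,b}"
proof -
  have "(p,t) \<in> (adj (AE G a b))\<^sup>*" using assms(1) by (simp add: region_def)
  then show ?thesis
  proof (cases rule: rtrancl.cases)
    case rtrancl_refl then show ?thesis using assms(2) by simp
  next
    case (rtrancl_into_rtrancl y)
    then show ?thesis by (auto simp: AE_def insert_commute)
  qed
qed

lemma region_step: "t \<in> region E p \<Longrightarrow> {t,s} \<in> E \<Longrightarrow> s \<in> region E p"
  unfolding region_def by (simp add: rtrancl_into_rtrancl)

lemma walk_mono: "walk E ps \<Longrightarrow> E \<subseteq> E' \<Longrightarrow> walk E' ps"
  unfolding walk_def by blast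

lemma walk_verts_edge:
  assumes "walk E ps" "x \<in> set ps" "x \<noteq> hd ps" shows "\<exists>e\<in>E. x \<in> e"
proof -
  obtain i where i: "i < length ps" "ps!i = x" using assms(2) by (metis in_set_conv_nth)
  have "i \<noteq> 0" using i assms(3) by (metis hd_conv_nth length_greater_0_conv less_nat_zero_code)
  then have "Suc (i - 1) < length ps" "Suc (i-1) = i" using i by auto
  then have "{ps!(i-1), ps!i} \<in> E" using assms(1) unfolding walk_def by metis
  then show ?thesis using i by blast
qed

lemma path_avoid:
  assumes wf: "wf_graph T" and r: "(p,q) \<in> (adj (AE T a b))\<^sup>*" and p: "p \<notin> {a,b}" "p \<in> verts T"
  shows "\<exists>ps. distinct ps \<and> ps \<noteq> [] \<and> hd ps = p \<and> last ps = q \<and> walk (edges T) ps \<and> set ps \<subseteq> verts T - {a,b}"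
proof -
  obtain ps where ps: "distinct ps" "ps \<noteq> []" "hd ps = p" "last ps = q" "walk (AE T a b) ps"
    using path_of_rtrancl[OF r] by blast
  have "set ps \<subseteq> verts T - {a,b}"
  proof
    fix x assume x: "x \<in> set ps"
    show "x \<in> verts T - {a,b}"
    proof (cases "x = hd ps")
      case True then show ?thesis using ps(3) p by simp
    next
      case False
      then obtain e where e: "e \<in> AE T a b" "x \<in> e" using walk_verts_edge[OF ps(5) x] by blast
      then have "e \<subseteq> verts T" using wf by (auto simp: AE_def wf_graph_def)
      then show ?thesis using e by (auto simp: AE_def)
    qed
  qed
  moreover have "walk (edges T) ps" using walk_mono[OF ps(5) AE_sub] .
  ultimately show ?thesis using ps by blast
qed

lemma walk_cons2: "walk E ps \<Longrightarrow> ps \<noteq> [] \<Longrightarrow> {a, hd ps} \<in> E \<Longrightarrow> walk E (a # ps)"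
  by (cases ps) (auto simp: walk_Cons)

lemma G1:
  assumes wf: "wf_graph T" and ac: "acyclic_graph T" and ab: "{a,b} \<in> edges T"
    and ap: "{a,p} \<in> edges T" and bq: "{b,q} \<in> edges T" and p: "p \<notin> {a,b}"
    and r: "(p,q) \<in> (adj (AE T a b))\<^sup>*"
  shows False
proof -
  have pv: "p \<in> verts T" using wf_edge2[OF wf ap] by simp
  have ab': "a \<noteq> b" "a \<in> verts T" "b \<in> verts T" using wf_edge2[OF wf ab] by auto
  obtain ps where ps: "distinct ps" "ps \<noteq> []" "hd ps = p" "last ps = q" "walk (edges T) ps"
     "set ps \<subseteq> verts T - {a,b}" using path_avoid[OF wf r p pv] by blast
  let ?vs = "a # ps @ [b]"
  have d: "distinct ?vs" using ps(1,6) ab' by auto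
  have l: "length ?vs \<ge> 3" using ps(2) by (cases ps) auto
  have s: "set ?vs \<subseteq> verts T" using ps(6) ab' by auto
  have w1: "walk (edges T) (ps @ [b])" using walk_snoc[OF ps(5) ps(2)] bq ps(4) by (simp add: insert_commute)
  have w: "walk (edges T) ?vs" using walk_cons2[OF w1] ps(2,3) ap by simp
  have c: "{last ?vs, hd ?vs} \<in> edges T" using ab by (simp add: insert_commute)
  show False using cycle_false[OF ac d l s w c] .
qed

lemma G2:
  assumes wf: "wf_graph T" and ac: "acyclic_graph T" and ab: "{a,b} \<in> edges T"
    and ap: "{a,p} \<in> edges T" and aq: "{a,q} \<in> edges T" and p: "p \<notin> {a,b}" and pq: "p \<noteq> q"
    and r: "(p,q) \<in> (adj (AE T a b))\<^sup>*"
  shows False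
proof -
  have pv: "p \<in> verts T" using wf_edge2[OF wf ap] by simp
  have ab': "a \<noteq> b" "a \<in> verts T" "b \<in> verts T" using wf_edge2[OF wf ab] by auto
  obtain ps where ps: "distinct ps" "ps \<noteq> []" "hd ps = p" "last ps = q" "walk (edges T) ps"
     "set ps \<subseteq> verts T - {a,b}" using path_avoid[OF wf r p pv] by blast
  let ?vs = "a # ps"
  have d: "distinct ?vs" using ps(1,6) ab' by auto
  have l2: "length ps \<ge> 2"
  proof (rule ccontr)
    assume "\<not> length ps \<ge> 2"
    moreover have "length ps > 0" using ps(2) by simp
    ultimately have "length ps = 1" by linarith
    then obtain x where "ps = [x]" by (metis One_nat_def length_0_conv length_Suc_conv)
    then show False using ps(3,4) pq by simp
  qed
  then have l: "length ?vs \<ge> 3" by simp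
  have s: "set ?vs \<subseteq> verts T" using ps(6) ab' by auto
  have w: "walk (edges T) ?vs" using walk_cons2[OF ps(5) ps(2)] ps(3) ap by simp
  have c: "{last ?vs, hd ?vs} \<in> edges T" using aq ps(2,4) by (simp add: insert_commute)
  show False using cycle_false[OF ac d l s w c] .
qed

lemma leaf_in_region:
  assumes wf: "wf_graph C" and ac: "acyclic_graph C" and B: "binary X C"
    and ab: "{a,b} \<in> edges C" and ap: "{a,p} \<in> edges C" and pb: "p \<noteq> b"
  shows "\<exists>x\<in>X. lab C x \<in> region (AE C a b) p"
proof -
  have ab': "a \<noteq> b" "a \<in> verts C" "b \<in> verts C" using wf_edge2[OF wf ab] by auto
  have ap': "a \<noteq> p" "p \<in> verts C" using wf_edge2[OF wf ap] by auto
  have finV: "finite (verts C)" using wf by (simp add: wf_graph_def)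
  let ?W = "{xs. distinct xs \<and> 2 \<le> length xs \<and> xs!0 = a \<and> xs!1 = p \<and> walk (edges C) xs \<and> set xs \<subseteq> verts C}"
  let ?Q = "\<lambda>n. \<exists>xs\<in>?W. length xs = n"
  have q2: "?Q 2"
  proof
    show "[a,p] \<in> ?W" using ap ap' ab' by (auto simp: walk_def)
  qed simp
  have bnd: "\<forall>n. ?Q n \<longrightarrow> (\<lambda>n. n) n < Suc (card (verts C))"
  proof (intro allI impI)
    fix n assume "?Q n"
    then obtain xs where xs: "xs \<in> ?W" "length xs = n" by blast
    then have "card (set xs) = n" by (simp add: distinct_card)
    moreover have "card (set xs) \<le> card (verts C)" using xs finV by (intro card_mono) auto
    ultimately show "(\<lambda>n. n) n < Suc (card (verts C))" by simp
  qed
  obtain n0 where n0: "?Q n0" "\<forall>n. ?Q n \<longrightarrow> n \<le> n0" using ex_has_greatest_nat[OF q2 bnd] by auto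
  obtain xs where xs: "distinct xs" "2 \<le> length xs" "xs!0 = a" "xs!1 = p" "walk (edges C) xs" "set xs \<subseteq> verts C"
    "length xs = n0" using n0(1) by blast
  have ne: "xs \<noteq> []" using xs(2) by auto
  have hd: "hd xs = a" using xs(3) ne by (simp add: hd_conv_nth)
  have bnot: "b \<notin> set xs"
  proof
    assume "b \<in> set xs"
    then obtain j where j: "j < length xs" "xs!j = b" by (metis in_set_conv_nth)
    have j2: "j \<ge> 2" using j xs(3,4) ab' pb by (cases j; cases "j - 1") auto
    let ?vs = "take (Suc j) xs"
    have d: "distinct ?vs" using xs(1) by simp
    have l: "length ?vs \<ge> 3" using j j2 by simp
    have s: "set ?vs \<subseteq> verts C" using xs(6) by (meson order_trans set_take_subset)
    have w: "walk (edges C) ?vs" using walk_take[OF xs(5)] .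
    have "last ?vs = b" using j by (simp add: take_Suc_conv_app_nth)
    moreover have "hd ?vs = a" using hd ne by (simp add: hd_take)
    ultimately have c: "{last ?vs, hd ?vs} \<in> edges C" using ab by (simp add: insert_commute)
    show False using cycle_false[OF ac d l s w c] .
  qed
  have inR: "xs!i \<in> region (AE C a b) p" if "1 \<le> i" "i < length xs" for i
    using that
  proof (induction i)
    case 0 then show ?case by simp
  next
    case (Suc i)
    show ?case
    proof (cases "i = 0")
      case True then show ?thesis using xs(4) region_in by simp
    next
      case False
      then have ih: "xs!i \<in> region (AE C a b) p" using Suc by simp
      have e: "{xs!i, xs!Suc i} \<in> edges C" using xs(5) Suc.prems unfolding walk_def by blast
      have "xs!i \<noteq> xs!0" using nth_eq_iff_index_eq[OF xs(1), of i 0] Suc.prems False ne by simp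
      moreover have "xs!Suc i \<noteq> xs!0" using nth_eq_iff_index_eq[OF xs(1), of "Suc i" 0] Suc.prems ne by simp
      ultimately have "xs!i \<noteq> a" "xs!Suc i \<noteq> a" using xs(3) by auto
      moreover have "xs!i \<noteq> b" "xs!Suc i \<noteq> b" using bnot Suc.prems by (auto simp: nth_mem)
      ultimately have "{xs!i, xs!Suc i} \<in> AE C a b" using e by (simp add: AE_def)
      then show ?thesis using region_step[OF ih] by blast
    qed
  qed
  let ?z = "xs!(n0 - 1)" and ?y = "xs!(n0 - 2)"
  have zl: "last xs = ?z" using ne xs(7) by (simp add: last_conv_nth)
  have zv: "?z \<in> verts C" using xs(6,7,2) by (metis diff_less nth_mem subsetD zero_less_numeral less_le_trans zero_less_one)
  have zR: "?z \<in> region (AE C a b) p" using inR[of "n0 - 1"] xs(2,7) by simp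
  have ye: "{?y, ?z} \<in> edges C"
  proof -
    have "Suc (n0 - 2) < length xs" "Suc (n0 - 2) = n0 - 1" using xs(2,7) by auto
    then show ?thesis using xs(5) unfolding walk_def by metis
  qed
  from B zv consider "deg C ?z = 1" "card (labels X C ?z) = 1" | "deg C ?z = 3" unfolding binary_def by blast
  then show ?thesis
  proof cases
    case 1
    then have "labels X C ?z \<noteq> {}" by auto
    then obtain x where x: "x \<in> X" "lab C x = ?z" by (auto simp: labels_def)
    have "lab C x \<in> region (AE C a b) p" using zR x(2) by simp
    then show ?thesis using x(1) by (rule bexI)
  next
    case 2
    have fn: "finite (nbrs C ?z)" using nbrs_finite[OF wf] .
    have "\<exists>y'. y' \<in> nbrs C ?z \<and> y' \<noteq> ?y"
    proof (rule ccontr)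
      assume "\<not> (\<exists>y'. y' \<in> nbrs C ?z \<and> y' \<noteq> ?y)"
      then have "nbrs C ?z \<subseteq> {?y}" by blast
      then have "card (nbrs C ?z) \<le> card {?y}" by (intro card_mono) simp_all
      then have "card (nbrs C ?z) \<le> 1" by simp
      then show False using 2 deg_nbrs[OF wf] by simp
    qed
    then obtain y' where y': "{?z, y'} \<in> edges C" "y' \<noteq> ?y" by (auto simp: nbrs_iff)
    have y'z: "y' \<noteq> ?z" using wf_edge2[OF wf y'(1)] by simp
    have y'v: "y' \<in> verts C" using wf_edge2[OF wf y'(1)] by simp
    show ?thesis
    proof (cases "y' \<in> set xs")
      case True
      then obtain j where j: "j < length xs" "xs!j = y'" by (metis in_set_conv_nth)
      have jn: "j \<noteq> n0 - 1" "j \<noteq> n0 - 2" using j y'z y'(2) by auto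
      then have j3: "j + 3 \<le> n0" using j xs(7) by linarith
      let ?vs = "drop j xs"
      have d: "distinct ?vs" using xs(1) by simp
      have l: "length ?vs \<ge> 3" using j3 xs(7) by simp
      have s: "set ?vs \<subseteq> verts C" using xs(6) by (meson order_trans set_drop_subset)
      have w: "walk (edges C) ?vs" using walk_drop[OF xs(5)] .
      have "last ?vs = ?z" using j j3 zl xs(7) by simp
      moreover have "hd ?vs = y'" using j by (simp add: hd_drop_conv_nth)
      ultimately have c: "{last ?vs, hd ?vs} \<in> edges C" using y'(1) by simp
      show ?thesis using cycle_false[OF ac d l s w c] by simp
    next
      case False
      have "xs @ [y'] \<in> ?W"
      proof -
        have "distinct (xs @ [y'])" using xs(1) False by simp
        moreover have "walk (edges C) (xs @ [y'])" using walk_snoc[OF xs(5) ne] y'(1) zl by simp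
        moreover have "(xs @ [y'])!0 = a" "(xs @ [y'])!1 = p" using xs(2,3,4) by (auto simp: nth_append)
        ultimately show ?thesis using xs(2,6) y'v by auto
      qed
      then have "?Q (Suc n0)" using xs(7) by (intro bexI[of _ "xs @ [y']"]) auto
      then show ?thesis using n0(2) by fastforce
    qed
  qed
qed

definition onecross :: "nat set set \<Rightarrow> nat set \<Rightarrow> bool" where
  "onecross E S \<longleftrightarrow> (\<forall>r s r' s'. {r,s} \<in> E \<longrightarrow> {r',s'} \<in> E \<longrightarrow> r \<in> S \<longrightarrow> s \<notin> S \<longrightarrow> r' \<in> S \<longrightarrow> s' \<notin> S
      \<longrightarrow> {r,s} = {r',s'})"

definition Pq :: "'x xgraph \<Rightarrow> 'x \<Rightarrow> 'x \<Rightarrow> 'x \<Rightarrow> 'x \<Rightarrow> bool" where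
  "Pq G x1 x2 x3 x4 \<longleftrightarrow> (\<exists>S. lab G x1 \<in> S \<and> lab G x2 \<in> S \<and> lab G x3 \<notin> S \<and> lab G x4 \<notin> S \<and> onecross (edges G) S)"

lemma Pq_pull:
  assumes iso: "isom X G H f" and wf: "wf_graph G" and lv: "lab G ` X \<subseteq> verts G"
    and x: "x1 \<in> X" "x2 \<in> X" "x3 \<in> X" "x4 \<in> X" and P: "Pq H x1 x2 x3 x4"
  shows "Pq G x1 x2 x3 x4"
proof -
  obtain S where S: "lab H x1 \<in> S" "lab H x2 \<in> S" "lab H x3 \<notin> S" "lab H x4 \<notin> S" "onecross (edges H) S"
    using P by (auto simp: Pq_def)
  let ?S = "{t \<in> verts G. f t \<in> S}"
  have lab: "lab H x = f (lab G x)" "lab G x \<in> verts G" if "x \<in> X" for x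
    using isom_lab[OF iso that] lv that by auto
  have inj: "inj_on f (verts G)" using isom_inj[OF iso] .
  have oc: "onecross (edges G) ?S"
    unfolding onecross_def
  proof (intro allI impI)
    fix r s r' s'
    assume h: "{r,s} \<in> edges G" "{r',s'} \<in> edges G" "r \<in> ?S" "s \<notin> ?S" "r' \<in> ?S" "s' \<notin> ?S"
    have v: "r \<in> verts G" "s \<in> verts G" "r' \<in> verts G" "s' \<in> verts G"
      using wf_edge2[OF wf h(1)] wf_edge2[OF wf h(2)] by auto
    have "{f r, f s} \<in> edges H" "{f r', f s'} \<in> edges H"
      using isom_edge[OF iso] v h(1,2) by auto
    moreover have "f r \<in> S" "f s \<notin> S" "f r' \<in> S" "f s' \<notin> S" using h(3-6) v by auto
    ultimately have "{f r, f s} = {f r', f s'}" using S(5) unfolding onecross_def by blast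
    then have "f ` {r,s} = f ` {r',s'}" by simp
    moreover have "{r,s} \<subseteq> verts G" "{r',s'} \<subseteq> verts G" using v by auto
    ultimately show "{r,s} = {r',s'}" using inj_on_image_eq_iff[OF inj] by blast
  qed
  show ?thesis unfolding Pq_def
    by (rule exI[of _ ?S]) (use S lab x oc in auto)
qed

lemma crossing:
  assumes "(s,t) \<in> (adj E)\<^sup>*" "s \<in> S" "t \<notin> S"
  shows "\<exists>r r'. {r,r'} \<in> E \<and> r \<in> S \<and> r' \<notin> S"
proof (rule ccontr)
  assume n: "\<not> (\<exists>r r'. {r,r'} \<in> E \<and> r \<in> S \<and> r' \<notin> S)"
  have "t' \<in> S" if "(s,t') \<in> (adj E)\<^sup>*" for t'
    using that
  proof (induction rule: rtrancl_induct)
    case base then show ?case using assms(2) .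
  next
    case (step y z) then show ?case using n by auto
  qed
  then show False using assms by blast
qed

lemma reach_restrict:
  assumes "(p,t) \<in> (adj E)\<^sup>*"
  shows "(p,t) \<in> (adj {e \<in> E. e \<subseteq> region E p})\<^sup>*"
  using assms
proof (induction rule: rtrancl_induct)
  case base then show ?case by simp
next
  case (step y z)
  have "y \<in> region E p" "z \<in> region E p" using step(1,2) by (auto simp: region_def rtrancl_into_rtrancl)
  then have "{y,z} \<in> {e \<in> E. e \<subseteq> region E p}" using step(2) by auto
  then show ?case using step(3) by (simp add: rtrancl_into_rtrancl)
qed

lemma Pq_holds:
  assumes wf: "wf_graph T" and ac: "acyclic_graph T" and ab: "{a,b} \<in> edges T"
    and na: "nbrs T a = {b, p1, p2}" and p: "p1 \<notin> {a,b}" "p2 \<notin> {a,b}"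
    and bq: "{b,q1} \<in> edges T" "{b,q2} \<in> edges T" and q: "q1 \<notin> {a,b}" "q2 \<notin> {a,b}"
    and l: "lab T x1 \<in> region (AE T a b) p1" "lab T x2 \<in> region (AE T a b) p2"
      "lab T x3 \<in> region (AE T a b) q1" "lab T x4 \<in> region (AE T a b) q2"
  shows "Pq T x1 x2 x3 x4"
proof -
  let ?R = "region (AE T a b)"
  let ?S = "?R p1 \<union> ?R p2 \<union> {a}"
  have ap: "{a,p1} \<in> edges T" "{a,p2} \<in> edges T" using na by (auto simp: nbrs_iff)
  have nr: "t \<notin> ?R p1 \<and> t \<notin> ?R p2" if "t \<in> ?R q" "q \<in> {q1,q2}" for t q
  proof -
    have bq': "{b,q} \<in> edges T" using that(2) bq by auto
    have "q \<notin> {a,b}" using that(2) q by auto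
    show ?thesis
    proof (intro conjI notI)
      assume "t \<in> ?R p1"
      then have "q \<in> ?R p1" using region_meet that(1) by blast
      then show False using G1[OF wf ac ab ap(1) bq' p(1)] by (simp add: region_def)
    next
      assume "t \<in> ?R p2"
      then have "q \<in> ?R p2" using region_meet that(1) by blast
      then show False using G1[OF wf ac ab ap(2) bq' p(2)] by (simp add: region_def)
    qed
  qed
  have x3: "lab T x3 \<notin> ?S"
    using nr[OF l(3)] region_AE_notin[OF l(3) q(1)] by auto
  have x4: "lab T x4 \<notin> ?S"
    using nr[OF l(4)] region_AE_notin[OF l(4) q(2)] by auto
  have cr: "{r,s} = {a,b}" if rs: "{r,s} \<in> edges T" "r \<in> ?S" "s \<notin> ?S" for r s
  proof (cases "r = a")
    case True
    then have "s \<in> nbrs T a" using rs(1) by (simp add: nbrs_iff)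
    then have "s \<in> {b,p1,p2}" using na by simp
    moreover have "p1 \<in> ?S" "p2 \<in> ?S" using region_in by auto
    ultimately have "s = b" using rs(3) by auto
    then show ?thesis using True by simp
  next
    case False
    then obtain pp where pp: "pp \<in> {p1,p2}" "r \<in> ?R pp" using rs(2) by auto
    have ppn: "pp \<notin> {a,b}" "{a,pp} \<in> edges T" using pp(1) p ap by auto
    have rn: "r \<notin> {a,b}" using region_AE_notin[OF pp(2) ppn(1)] .
    have sa: "s \<noteq> a" using rs(3) by auto
    show ?thesis
    proof (cases "s = b")
      case True
      then have br: "{b,r} \<in> edges T" using rs(1) by (simp add: insert_commute)
      have "(pp,r) \<in> (adj (AE T a b))\<^sup>*" using pp(2) by (simp add: region_def)
      then show ?thesis using G1[OF wf ac ab ppn(2) br ppn(1)] by simp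
    next
      case False
      then have "{r,s} \<in> AE T a b" using rs(1) rn sa by (simp add: AE_def)
      then have "s \<in> ?R pp" using region_step[OF pp(2)] by blast
      then show ?thesis using rs(3) pp(1) by auto
    qed
  qed
  have oc: "onecross (edges T) ?S" unfolding onecross_def
  proof (intro allI impI)
    fix r s r' s' assume h: "{r,s} \<in> edges T" "{r',s'} \<in> edges T" "r \<in> ?S" "s \<notin> ?S" "r' \<in> ?S" "s' \<notin> ?S"
    show "{r,s} = {r',s'}" using cr[OF h(1,3,4)] cr[OF h(2,5,6)] by simp
  qed
  show ?thesis unfolding Pq_def
  proof (intro exI[of _ ?S] conjI)
    show "lab T x1 \<in> ?S" using l(1) by (rule UnI1[OF UnI1])
    show "lab T x2 \<in> ?S" using l(2) by (rule UnI1[OF UnI2])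
    show "lab T x3 \<notin> ?S" by (rule x3)
    show "lab T x4 \<notin> ?S" by (rule x4)
    show "onecross (edges T) ?S" by (rule oc)
  qed
qed

lemma Pq_fails:
  assumes E0: "E0 \<subseteq> edges T"
    and e: "{p1,a} \<in> edges T" "{a,q1} \<in> edges T" "{p2,b} \<in> edges T" "{b,q2} \<in> edges T"
    and l: "m1 \<in> region E0 p1" "n1 \<in> region E0 q1" "m2 \<in> region E0 p2" "n2 \<in> region E0 q2"
    and disj: "(region E0 p1 \<union> region E0 q1 \<union> {a}) \<inter> (region E0 p2 \<union> region E0 q2 \<union> {b}) = {}"
    and S: "m1 \<in> S" "n1 \<notin> S" "m2 \<in> S" "n2 \<notin> S" "onecross (edges T) S"
  shows False
proof -
  have path: "(m, n) \<in> (adj {e \<in> edges T. e \<subseteq> region E0 p \<union> region E0 q \<union> {z}})\<^sup>*"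
    if m: "m \<in> region E0 p" and n: "n \<in> region E0 q" and pz: "{p,z} \<in> edges T" and zq: "{z,q} \<in> edges T"
    for m n p q z
  proof -
    let ?E = "{e \<in> edges T. e \<subseteq> region E0 p \<union> region E0 q \<union> {z}}"
    have r1: "(p, m) \<in> (adj ?E)\<^sup>*"
    proof -
      have r: "(p,m) \<in> (adj {e \<in> E0. e \<subseteq> region E0 p})\<^sup>*" using reach_restrict m by (simp add: region_def)
      have sb: "{e \<in> E0. e \<subseteq> region E0 p} \<subseteq> ?E" using E0 by auto
      show ?thesis using adj_mono[OF sb r] .
    qed
    have r2: "(q, n) \<in> (adj ?E)\<^sup>*"
    proof -
      have r: "(q,n) \<in> (adj {e \<in> E0. e \<subseteq> region E0 q})\<^sup>*" using reach_restrict n by (simp add: region_def)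
      have sb: "{e \<in> E0. e \<subseteq> region E0 q} \<subseteq> ?E" using E0 by auto
      show ?thesis using adj_mono[OF sb r] .
    qed
    have "{p,z} \<in> ?E" "{z,q} \<in> ?E" using pz zq region_in by auto
    then have "(p,z) \<in> adj ?E" "(z,q) \<in> adj ?E" by auto
    then have "(p,q) \<in> (adj ?E)\<^sup>*" by (meson rtrancl.rtrancl_into_rtrancl r_into_rtrancl)
    then show ?thesis using adj_sym[OF r1] r2 by (meson rtrancl_trans)
  qed
  have P1: "(m1, n1) \<in> (adj {e \<in> edges T. e \<subseteq> region E0 p1 \<union> region E0 q1 \<union> {a}})\<^sup>*"
    using path[OF l(1) l(2) e(1) e(2)] .
  have P2: "(m2, n2) \<in> (adj {e \<in> edges T. e \<subseteq> region E0 p2 \<union> region E0 q2 \<union> {b}})\<^sup>*"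
    using path[OF l(3) l(4) e(3) e(4)] .
  obtain r r' where c1: "{r,r'} \<in> edges T" "{r,r'} \<subseteq> region E0 p1 \<union> region E0 q1 \<union> {a}" "r \<in> S" "r' \<notin> S"
    using crossing[OF P1 S(1,2)] by auto
  obtain t t' where c2: "{t,t'} \<in> edges T" "{t,t'} \<subseteq> region E0 p2 \<union> region E0 q2 \<union> {b}" "t \<in> S" "t' \<notin> S"
    using crossing[OF P2 S(3,4)] by auto
  have "{r,r'} = {t,t'}" using S(5) c1 c2 unfolding onecross_def by blast
  then have "r \<in> region E0 p2 \<union> region E0 q2 \<union> {b}" using c2(2) by auto
  moreover have "r \<in> region E0 p1 \<union> region E0 q1 \<union> {a}" using c1(2) by auto
  ultimately show False using disj by blast
qed

lemma four_subsets:
  fixes p q r s :: nat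
  assumes d: "distinct [p,q,r,s]" and A: "A \<subseteq> {p,q,r,s}" and c: "card A = 2"
  shows "A = {p,q} \<or> A = {r,s} \<or> A = {p,r} \<or> A = {q,s} \<or> A = {p,s} \<or> A = {q,r}"
proof -
  obtain x y where xy: "A = {x,y}" "x \<noteq> y" using c by (meson card_2_iff)
  have "x \<in> {p,q,r,s}" "y \<in> {p,q,r,s}" using A xy by auto
  then show ?thesis using xy d by (auto simp: insert_commute)
qed

lemma xforest_connected_xtree:
  assumes F: "is_xforest X F" and c: "connected_graph F" and ne: "verts F \<noteq> {}"
  shows "is_xtree X F"
proof -
  have wf: "wf_graph F" using F by (rule xforest_wf)
  have lv: "lab F ` X \<subseteq> verts F" using F by (rule xforest_lab)
  let ?R = "{(u, v). u \<in> verts F \<and> v \<in> verts F \<and> (u, v) \<in> (adjrel F)\<^sup>*}"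
  have Rx: "?R `` {x} = verts F" if "x \<in> verts F" for x
    using that c by (auto simp: connected_graph_def)
  have comp: "components F = {verts F}"
    unfolding components_def quotient_def using Rx ne by auto
  have ind: "induced F (verts F) = F"
  proof -
    have "{e \<in> edges F. e \<subseteq> verts F} = edges F" using wf by (auto simp: wf_graph_def)
    then show ?thesis by (simp add: induced_def)
  qed
  have blk: "{x \<in> X. lab F x \<in> verts F} = X" using lv by auto
  have "is_xtree {x \<in> X. lab F x \<in> verts F} (induced F (verts F))"
    using F comp unfolding is_xforest_def by blast
  then show ?thesis using blk ind by simp
qed

lemma binary_iso:
  assumes iso: "isom X H F f" and wH: "wf_graph H" and wF: "wf_graph F" and lH: "lab H ` X \<subseteq> verts H"
    and B: "binary X H"
  shows "binary X F"
  unfolding binary_def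
proof
  fix t assume t: "t \<in> verts F"
  then obtain s where s: "s \<in> verts H" "t = f s" using isom_surj[OF iso] by (metis imageE)
  have "deg F t = deg H s" using isom_deg[OF iso wH wF s(1)] s(2) by simp
  moreover have "labels X F t = labels X H s" using isom_labels[OF iso lH s(1)] s(2) by simp
  ultimately show "(deg F t = 1 \<and> card (labels X F t) = 1) \<or> (deg F t = 3 \<and> labels X F t = {})"
    using B s(1) by (simp add: binary_def)
qed

lemma disj_unions:
  assumes "A \<inter> B = {}" "A \<inter> D = {}" "E \<inter> B = {}" "E \<inter> D = {}" "a \<notin> B" "a \<notin> D" "b \<notin> A" "b \<notin> E" "a \<noteq> b"
  shows "(A \<union> E \<union> {a}) \<inter> (B \<union> D \<union> {b}) = {}"
  using assms by blast

lemma inCX_via_iso: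
  assumes H: "in_CX X H" and iso: "xiso X H F" and F: "is_xforest X F"
  shows "in_CX X F"
proof -
  have TH: "is_xtree X H" using H by (rule inCX_xtree)
  obtain f where f: "isom X H F f" using iso xiso_isom by blast
  have wH: "wf_graph H" using TH by (rule xtree_wf)
  have wF: "wf_graph F" using F by (rule xforest_wf)
  have c: "connected_graph F" using isom_connected[OF f wH xtree_connected[OF TH]] .
  have "verts H \<noteq> {}" using TH by (simp add: is_xtree_def is_tree_def)
  then have ne: "verts F \<noteq> {}" using isom_surj[OF f] by auto
  have TF: "is_xtree X F" using xforest_connected_xtree[OF F c ne] .
  have "binary X F" using binary_iso[OF f wH wF xtree_lab[OF TH] inCX_binary[OF H]] .
  then show ?thesis using binary_inCX[OF TF] by simp
qed

lemma covers_contract: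
  assumes w: "is_xforest X w" and H: "is_xforest X H" and ab: "{a,b} \<in> edges H" "a \<noteq> b"
    and iso: "xiso X w (contract H a b)"
  shows "covers X w H"
  unfolding covers_def one_step_def using w H ab iso by blast

lemma core_int:
  assumes C: "in_CX X C" and fin: "finite X" and X3: "card X \<ge> 3"
    and ie: "internal_edge C a b" and iso: "xiso X w (contract C a b)" and w: "is_xforest X w"
  shows "\<exists>N1 N2. covers X w C \<and> covers X w N1 \<and> covers X w N2 \<and>
     \<not> xiso X N1 C \<and> \<not> xiso X N2 C \<and> \<not> xiso X N2 N1 \<and>
     (\<forall>F. covers X w F \<longrightarrow> xiso X F C \<or> xiso X F N1 \<or> xiso X F N2) \<and>
     (\<forall>F. covers X w F \<longrightarrow> in_CX X F \<and> (\<exists>u v. internal_edge F u v \<and> xiso X w (contract F u v))) \<and>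
     (\<forall>G. covers X w G \<and> \<not> xiso X G C \<longrightarrow> is_nni X C a b G)"
proof -
  have T: "is_xtree X C" using C by (rule inCX_xtree)
  have wC: "wf_graph C" using T by (rule xtree_wf)
  have lC: "lab C ` X \<subseteq> verts C" using T by (rule xtree_lab)
  have B: "binary X C" using C by (rule inCX_binary)
  have ac: "acyclic_graph C" using T by (rule xtree_acyclic)
  have Xne: "X \<noteq> {}" using X3 by auto
  have ab: "{a,b} \<in> edges C" and nl: "a \<notin> leaves C" "b \<notin> leaves C" using ie by (auto simp: internal_edge_def)
  have ba: "{b,a} \<in> edges C" using ab by (simp add: insert_commute)
  have ab': "a \<noteq> b" "a \<in> verts C" "b \<in> verts C" using wf_edge2[OF wC ab] by auto
  have ncC: "nocommon C a b" using acyclic_nocommon[OF wC ac ab] .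
  have da: "deg C a = 3" "labels X C a = {}" using B ab' nl by (auto simp: binary_def leaves_def)
  have db: "deg C b = 3" "labels X C b = {}" using B ab' nl by (auto simp: binary_def leaves_def)
  have fa: "finite (nbrs C a)" "finite (nbrs C b)" using nbrs_finite[OF wC] by auto
  have "card (nbrs C a - {b}) = 2"
    using card_minus1[OF fa(1), of b] ab da(1) deg_nbrs[OF wC] by (simp add: nbrs_iff)
  then obtain \<beta>1 \<beta>2 where nbA: "nbrs C a - {b} = {\<beta>1,\<beta>2}" "\<beta>1 \<noteq> \<beta>2" by (meson card_2_iff)
  have "card (nbrs C b - {a}) = 2"
    using card_minus1[OF fa(2), of a] ba db(1) deg_nbrs[OF wC] by (simp add: nbrs_iff)
  then obtain \<gamma>1 \<gamma>2 where nbB: "nbrs C b - {a} = {\<gamma>1,\<gamma>2}" "\<gamma>1 \<noteq> \<gamma>2" by (meson card_2_iff)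
  have e\<beta>: "{a,\<beta>1} \<in> edges C" "{a,\<beta>2} \<in> edges C" "\<beta>1 \<noteq> b" "\<beta>2 \<noteq> b"
    using nbA by (auto simp: nbrs_iff set_eq_iff)
  have e\<gamma>: "{b,\<gamma>1} \<in> edges C" "{b,\<gamma>2} \<in> edges C" "\<gamma>1 \<noteq> a" "\<gamma>2 \<noteq> a"
    using nbB by (auto simp: nbrs_iff set_eq_iff)
  have \<beta>a: "\<beta>1 \<noteq> a" "\<beta>2 \<noteq> a" using wf_edge2[OF wC e\<beta>(1)] wf_edge2[OF wC e\<beta>(2)] by auto
  have \<gamma>b: "\<gamma>1 \<noteq> b" "\<gamma>2 \<noteq> b" using wf_edge2[OF wC e\<gamma>(1)] wf_edge2[OF wC e\<gamma>(2)] by auto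
  have nc2: "x \<noteq> y" if "{a,x} \<in> edges C" "{b,y} \<in> edges C" for x y
  proof
    assume "x = y"
    then have "{a,x} \<in> edges C \<and> {b,x} \<in> edges C" using that by simp
    then show False using ncC unfolding nocommon_def by blast
  qed
  have \<beta>\<gamma>: "\<beta>1 \<noteq> \<gamma>1" "\<beta>1 \<noteq> \<gamma>2" "\<beta>2 \<noteq> \<gamma>1" "\<beta>2 \<noteq> \<gamma>2"
    using nc2[OF e\<beta>(1) e\<gamma>(1)] nc2[OF e\<beta>(1) e\<gamma>(2)] nc2[OF e\<beta>(2) e\<gamma>(1)] nc2[OF e\<beta>(2) e\<gamma>(2)] by auto
  have nbC: "nbrs C a = {b,\<beta>1,\<beta>2}"
  proof -
    have "b \<in> nbrs C a" using ab by (simp add: nbrs_iff)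
    then have "nbrs C a = insert b (nbrs C a - {b})" by (rule insert_Diff[symmetric])
    then show ?thesis by (simp only: nbA(1))
  qed
  have nbCb: "nbrs C b = {a,\<gamma>1,\<gamma>2}"
  proof -
    have "a \<in> nbrs C b" using ba by (simp add: nbrs_iff)
    then have "nbrs C b = insert a (nbrs C b - {a})" by (rule insert_Diff[symmetric])
    then show ?thesis by (simp only: nbB(1))
  qed
  interpret I1: nni_setting C a b \<beta>2 \<gamma>1
    by unfold_locales (use wC ac ab e\<beta> e\<gamma> in auto)
  interpret I2: nni_setting C a b \<beta>2 \<gamma>2
    by unfold_locales (use wC ac ab e\<beta> e\<gamma> in auto)
  define N1 where "N1 = nni_swap C a \<beta>2 b \<gamma>1"
  define N2 where "N2 = nni_swap C a \<beta>2 b \<gamma>2"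
  have N1C: "in_CX X N1" unfolding N1_def using I1.N_inCX[OF C] .
  have N2C: "in_CX X N2" unfolding N2_def using I2.N_inCX[OF C] .
  have N1F: "is_xforest X N1" using xtree_xforest[OF inCX_xtree[OF N1C] Xne] .
  have N2F: "is_xforest X N2" using xtree_xforest[OF inCX_xtree[OF N2C] Xne] .
  have CF: "is_xforest X C" using xtree_xforest[OF T Xne] .
  have covC: "covers X w C" using covers_contract[OF w CF ab ab'(1) iso] .
  have covN1: "covers X w N1" using covers_contract[OF w N1F _ ab'(1)] I1.N_ab I1.N_contract iso
    unfolding N1_def by simp
  have covN2: "covers X w N2" using covers_contract[OF w N2F _ ab'(1)] I2.N_ab I2.N_contract iso
    unfolding N2_def by simp
  let ?R = "region (AE C a b)"
  have AEs: "AE C b a = AE C a b" by (rule AE_sym)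
  obtain l1 where l1: "l1 \<in> X" "lab C l1 \<in> ?R \<beta>1" using leaf_in_region[OF wC ac B ab e\<beta>(1) e\<beta>(3)] by blast
  obtain l2 where l2: "l2 \<in> X" "lab C l2 \<in> ?R \<beta>2" using leaf_in_region[OF wC ac B ab e\<beta>(2) e\<beta>(4)] by blast
  obtain l3 where l3: "l3 \<in> X" "lab C l3 \<in> ?R \<gamma>1" using leaf_in_region[OF wC ac B ba e\<gamma>(1) e\<gamma>(3)] AEs by auto
  obtain l4 where l4: "l4 \<in> X" "lab C l4 \<in> ?R \<gamma>2" using leaf_in_region[OF wC ac B ba e\<gamma>(2) e\<gamma>(4)] AEs by auto
  have nab: "a \<notin> ?R x \<and> b \<notin> ?R x" if "x \<in> {\<beta>1,\<beta>2,\<gamma>1,\<gamma>2}" for x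
  proof -
    have "x \<notin> {a,b}" using that \<beta>a \<gamma>b e\<beta> e\<gamma> by auto
    then show ?thesis using region_AE_notin[of _ C a b x] region_in by blast
  qed
  have dBB: "?R \<beta>1 \<inter> ?R \<beta>2 = {}"
  proof (rule ccontr)
    assume "?R \<beta>1 \<inter> ?R \<beta>2 \<noteq> {}"
    then obtain t where "t \<in> ?R \<beta>1" "t \<in> ?R \<beta>2" by blast
    then have "\<beta>2 \<in> ?R \<beta>1" by (rule region_meet)
    then show False using G2[OF wC ac ab e\<beta>(1) e\<beta>(2) _ nbA(2)] \<beta>a e\<beta> by (simp add: region_def)
  qed
  have dGG: "?R \<gamma>1 \<inter> ?R \<gamma>2 = {}"
  proof (rule ccontr)
    assume "?R \<gamma>1 \<inter> ?R \<gamma>2 \<noteq> {}"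
    then obtain t where "t \<in> ?R \<gamma>1" "t \<in> ?R \<gamma>2" by blast
    then have "\<gamma>2 \<in> ?R \<gamma>1" by (rule region_meet)
    then show False using G2[OF wC ac ba e\<gamma>(1) e\<gamma>(2) _ nbB(2)] \<gamma>b e\<gamma> AEs by (simp add: region_def)
  qed
  have dBG: "?R \<beta> \<inter> ?R \<gamma> = {}" if "\<beta> \<in> {\<beta>1,\<beta>2}" "\<gamma> \<in> {\<gamma>1,\<gamma>2}" for \<beta> \<gamma>
  proof (rule ccontr)
    have e1: "{a,\<beta>} \<in> edges C" "\<beta> \<notin> {a,b}" using that e\<beta> \<beta>a by auto
    have e2: "{b,\<gamma>} \<in> edges C" using that e\<gamma> by auto
    assume "?R \<beta> \<inter> ?R \<gamma> \<noteq> {}"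
    then obtain t where "t \<in> ?R \<beta>" "t \<in> ?R \<gamma>" by blast
    then have "\<gamma> \<in> ?R \<beta>" by (rule region_meet)
    then show False using G1[OF wC ac ab e1(1) e2 e1(2)] by (simp add: region_def)
  qed
  have disj1: "(?R \<beta>1 \<union> ?R \<gamma>1 \<union> {a}) \<inter> (?R \<beta>2 \<union> ?R \<gamma>2 \<union> {b}) = {}"
    by (rule disj_unions) (use dBB dGG dBG[of \<beta>1 \<gamma>2] dBG[of \<beta>2 \<gamma>1] nab ab'(1) in auto)
  have disj2: "(?R \<beta>1 \<union> ?R \<gamma>2 \<union> {a}) \<inter> (?R \<beta>2 \<union> ?R \<gamma>1 \<union> {b}) = {}"
    by (rule disj_unions) (use dBB dGG dBG[of \<beta>1 \<gamma>1] dBG[of \<beta>2 \<gamma>2] nab ab'(1) in auto)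
  have disj3: "(?R \<beta>1 \<union> ?R \<gamma>2 \<union> {a}) \<inter> (?R \<gamma>1 \<union> ?R \<beta>2 \<union> {b}) = {}"
    using disj2 by blast
  have lN1: "lab N1 = lab C" "lab N2 = lab C" unfolding N1_def N2_def by (simp_all add: nni_simps)
  have EN1: "edges N1 = (edges C - {{a,\<beta>2},{b,\<gamma>1}}) \<union> {{a,\<gamma>1},{b,\<beta>2}}" unfolding N1_def by (simp add: nni_simps)
  have EN2: "edges N2 = (edges C - {{a,\<beta>2},{b,\<gamma>2}}) \<union> {{a,\<gamma>2},{b,\<beta>2}}" unfolding N2_def by (simp add: nni_simps)
  have s1: "{\<beta>1,a} \<noteq> {a,\<beta>2}" "{\<beta>1,a} \<noteq> {b,\<gamma>1}" "{\<beta>1,a} \<noteq> {b,\<gamma>2}" "{b,\<gamma>2} \<noteq> {a,\<beta>2}" "{b,\<gamma>2} \<noteq> {b,\<gamma>1}"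
    "{\<gamma>1,b} \<noteq> {a,\<beta>2}" "{\<gamma>1,b} \<noteq> {b,\<gamma>2}"
    using nbA(2) nbB(2) \<beta>a \<gamma>b ab'(1) \<beta>\<gamma> e\<beta> e\<gamma> by (auto simp: doubleton_eq_iff)
  have eN1: "{\<beta>1,a} \<in> edges N1" "{a,\<gamma>1} \<in> edges N1" "{\<beta>2,b} \<in> edges N1" "{b,\<gamma>2} \<in> edges N1"
    unfolding EN1 using e\<beta>(1) e\<gamma>(2) s1 by (auto simp: insert_commute)
  have eN2: "{\<beta>1,a} \<in> edges N2" "{a,\<gamma>2} \<in> edges N2" "{\<beta>2,b} \<in> edges N2" "{\<gamma>1,b} \<in> edges N2"
    unfolding EN2 using e\<beta>(1) e\<gamma>(1) s1 by (auto simp: insert_commute)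
  have E0N1: "AE C a b \<subseteq> edges N1" using I1.AE_N AE_sub unfolding N1_def by metis
  have E0N2: "AE C a b \<subseteq> edges N2" using I2.AE_N AE_sub unfolding N2_def by metis
  have PC: "Pq C l1 l2 l3 l4"
    by (rule Pq_holds[OF wC ac ab nbC]) (use \<beta>a e\<beta> \<gamma>b e\<gamma> l1 l2 l3 l4 in auto)
  have nPN1: "\<not> Pq N1 l1 l2 l3 l4"
  proof
    assume "Pq N1 l1 l2 l3 l4"
    then obtain S where S: "lab C l1 \<in> S" "lab C l2 \<in> S" "lab C l3 \<notin> S" "lab C l4 \<notin> S" "onecross (edges N1) S"
      unfolding Pq_def lN1 by blast
    show False by (rule Pq_fails[OF E0N1 eN1 l1(2) l3(2) l2(2) l4(2) disj1 S(1,3,2,4,5)])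
  qed
  have nPN2: "\<not> Pq N2 l1 l2 l3 l4"
  proof
    assume "Pq N2 l1 l2 l3 l4"
    then obtain S where S: "lab C l1 \<in> S" "lab C l2 \<in> S" "lab C l3 \<notin> S" "lab C l4 \<notin> S" "onecross (edges N2) S"
      unfolding Pq_def lN1 by blast
    have e': "{b,\<gamma>1} \<in> edges N2" using eN2(4) by (simp add: insert_commute)
    show False by (rule Pq_fails[OF E0N2 eN2(1,2,3) e' l1(2) l4(2) l2(2) l3(2) disj2 S(1,4,2,3,5)])
  qed
  have nbN1: "nbrs N1 a = {b,\<beta>1,\<gamma>1}" using I1.N_nbrs_a nbC nbA(2) e\<beta>(4) unfolding N1_def by auto
  have PN1: "Pq N1 l1 l3 l2 l4"
  proof -
    have w1: "wf_graph N1" "acyclic_graph N1" "{a,b} \<in> edges N1"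
      unfolding N1_def using I1.N_wf I1.N_acyclic I1.N_ab by auto
    have A1: "AE N1 a b = AE C a b" unfolding N1_def by (rule I1.AE_N)
    have "{b,\<beta>2} \<in> edges N1" "{b,\<gamma>2} \<in> edges N1" using eN1 by (auto simp: insert_commute)
    then show ?thesis
      by (intro Pq_holds[OF w1 nbN1]) (use \<beta>a e\<beta> \<gamma>b e\<gamma> l1 l2 l3 l4 A1 lN1 in auto)
  qed
  have nPN2': "\<not> Pq N2 l1 l3 l2 l4"
  proof
    assume "Pq N2 l1 l3 l2 l4"
    then obtain S where S: "lab C l1 \<in> S" "lab C l3 \<in> S" "lab C l2 \<notin> S" "lab C l4 \<notin> S" "onecross (edges N2) S"
      unfolding Pq_def lN1 by blast
    have e': "{\<gamma>1,b} \<in> edges N2" "{b,\<beta>2} \<in> edges N2" using eN2 by (auto simp: insert_commute)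
    show False by (rule Pq_fails[OF E0N2 eN2(1,2) e' l1(2) l4(2) l3(2) l2(2) disj3 S(1,4,2,3,5)])
  qed
  have wN1: "wf_graph N1" unfolding N1_def by (rule I1.N_wf)
  have wN2: "wf_graph N2" unfolding N2_def by (rule I2.N_wf)
  have lvN1: "lab N1 ` X \<subseteq> verts N1" using xforest_lab[OF N1F] .
  have lvN2: "lab N2 ` X \<subseteq> verts N2" using xforest_lab[OF N2F] .
  have ni1: "\<not> xiso X N1 C"
  proof
    assume "xiso X N1 C"
    then obtain f where f: "isom X N1 C f" using xiso_isom by blast
    show False using Pq_pull[OF f wN1 lvN1 l1(1) l2(1) l3(1) l4(1) PC] nPN1 by simp
  qed
  have ni2: "\<not> xiso X N2 C"
  proof
    assume "xiso X N2 C"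
    then obtain f where f: "isom X N2 C f" using xiso_isom by blast
    show False using Pq_pull[OF f wN2 lvN2 l1(1) l2(1) l3(1) l4(1) PC] nPN2 by simp
  qed
  have ni3: "\<not> xiso X N2 N1"
  proof
    assume "xiso X N2 N1"
    then obtain f where f: "isom X N2 N1 f" using xiso_isom by blast
    show False using Pq_pull[OF f wN2 lvN2 l1(1) l3(1) l2(1) l4(1) PN1] nPN2' by simp
  qed
  have cw: "connected_graph w" using w_connected[OF T ab iso w] .
  have cls: "(xiso X C F \<or> xiso X N1 F \<or> xiso X N2 F) \<and> (\<exists>u v. internal_edge F u v \<and> xiso X w (contract F u v))"
    if cov: "covers X w F" for F
  proof -
    have F: "is_xforest X F" using cov by (simp add: covers_def)
    obtain G1 where G1: "one_step X F G1" "xiso X w G1" using cov by (auto simp: covers_def)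
    obtain u v where uv: "u \<noteq> v" "{u,v} \<in> edges F" "G1 = contract F u v"
      using cover_step[OF F G1 w cw] by blast
    have wF: "wf_graph F" using F by (rule xforest_wf)
    have ncF: "nocommon F u v" using acyclic_nocommon[OF wF xforest_acyclic[OF F] uv(2)] .
    have "xiso X (contract C a b) w" using xiso_sym[OF xforest_lab[OF w] iso] .
    then have "xiso X (contract C a b) (contract F u v)" using G1(2) uv(3) xiso_trans by blast
    then obtain \<psi> where \<psi>: "isom X (contract C a b) (contract F u v) \<psi>" using xiso_isom by blast
    have \<psi>a: "\<psi> a = u" using local_u[OF B wC lC ab ncC F uv(2) ncF \<psi> fin] .
    have wC': "wf_graph (contract C a b)" using contract_wf[OF wC ab] .
    have wF': "wf_graph (contract F u v)" using contract_wf[OF wF uv(2)] .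
    have lC': "lab (contract C a b) ` X \<subseteq> verts (contract C a b)" using contract_lab_verts[OF lC ab'(2,1)] .
    have aC': "a \<in> verts (contract C a b)" using ab' by (simp add: contract_simps)
    have dd: "deg (contract F u v) u = deg (contract C a b) a" using isom_deg[OF \<psi> wC' wF' aC'] \<psi>a by simp
    have ll: "labels X (contract F u v) u = labels X (contract C a b) a" using isom_labels[OF \<psi> lC' aC'] \<psi>a by simp
    have nn: "nbrs (contract F u v) u = \<psi> ` nbrs (contract C a b) a" using isom_nbrs[OF \<psi> wC' wF' aC'] \<psi>a by simp
    have dsC: "deg (contract C a b) a + 2 = deg C a + deg C b" using contract_deg_u[OF wC ab ncC] .
    have dsF: "deg (contract F u v) u + 2 = deg F u + deg F v" using contract_deg_u[OF wF uv(2) ncF] .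
    have uvF: "u \<in> verts F" "v \<in> verts F" using wf_edge2[OF wF uv(2)] by auto
    have lu: "labels X F u = {}" "labels X F v = {}"
      using ll da(2) db(2) contract_labels_u[of X F u v] contract_labels_u[of X C a b] by auto
    have "deg F u \<ge> 3" "deg F v \<ge> 3" using xforest_deg[OF F] uvF lu by auto
    then have du: "deg F u = 3" "deg F v = 3" using dd dsC dsF da db by auto
    let ?S4 = "{\<beta>1,\<beta>2,\<gamma>1,\<gamma>2}"
    have nC': "nbrs (contract C a b) a = ?S4"
      using contract_nbrs_u[OF wC ab] nbC nbCb \<beta>a \<gamma>b e\<beta> e\<gamma> ab'(1) by auto
    let ?Au = "nbrs F u - {v}" and ?Av = "nbrs F v - {u}"
    have uu: "u \<notin> nbrs F u" "v \<notin> nbrs F v" using wf_edge2[OF wF, of u u] wf_edge2[OF wF, of v v] by (auto simp: nbrs_iff)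
    have nF': "nbrs (contract F u v) u = ?Au \<union> ?Av" using contract_nbrs_u[OF wF uv(2)] uu by auto
    have AuAv: "?Au \<inter> ?Av = {}" using ncF by (auto simp: nocommon_def nbrs_iff)
    have cAu: "card ?Au = 2"
    proof -
      have "v \<in> nbrs F u" using uv(2) by (simp add: nbrs_iff)
      then have "card ?Au + 1 = card (nbrs F u)" by (rule card_minus1[OF nbrs_finite[OF wF]])
      moreover have "card (nbrs F u) = 3" using du(1) deg_nbrs[OF wF, of u] by simp
      ultimately show ?thesis by simp
    qed
    have S4v: "?S4 \<subseteq> verts C - {b}"
    proof -
      have "nbrs (contract C a b) a \<subseteq> verts (contract C a b)" by (rule nbrs_verts[OF wC'])
      then show ?thesis unfolding nC' by (simp only: contract_simps)
    qed
    have injS4: "inj_on \<psi> ?S4"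
    proof -
      have "inj_on \<psi> (verts (contract C a b))" by (rule isom_inj[OF \<psi>])
      then have "inj_on \<psi> (verts C - {b})" by (simp only: contract_simps)
      then show ?thesis using S4v by (rule inj_on_subset)
    qed
    define A' where "A' = {t \<in> ?S4. \<psi> t \<in> ?Au}"
    have A'S: "A' \<subseteq> ?S4" unfolding A'_def by blast
    have imA: "\<psi> ` A' = ?Au"
    proof
      show "\<psi> ` A' \<subseteq> ?Au" unfolding A'_def by blast
      show "?Au \<subseteq> \<psi> ` A'"
      proof
        fix y assume y: "y \<in> ?Au"
        then have "y \<in> \<psi> ` ?S4" using nn nC' nF' by auto
        then obtain t where "t \<in> ?S4" "y = \<psi> t" by blast
        then show "y \<in> \<psi> ` A'" using y unfolding A'_def by blast
      qed
    qed
    have imB: "\<psi> ` (?S4 - A') = ?Av"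
    proof
      show "\<psi> ` (?S4 - A') \<subseteq> ?Av"
      proof
        fix y assume "y \<in> \<psi> ` (?S4 - A')"
        then obtain t where t: "t \<in> ?S4" "t \<notin> A'" "y = \<psi> t" by blast
        then have "y \<in> ?Au \<union> ?Av" using nn nC' nF' by auto
        moreover have "y \<notin> ?Au" using t unfolding A'_def by blast
        ultimately show "y \<in> ?Av" by blast
      qed
      show "?Av \<subseteq> \<psi> ` (?S4 - A')"
      proof
        fix y assume y: "y \<in> ?Av"
        then have "y \<in> \<psi> ` ?S4" using nn nC' nF' by auto
        then obtain t where t: "t \<in> ?S4" "y = \<psi> t" by blast
        have "t \<notin> A'" using t y AuAv unfolding A'_def by blast
        then show "y \<in> \<psi> ` (?S4 - A')" using t by blast
      qed
    qed
    have cA': "card A' = 2"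
    proof -
      have "card (\<psi> ` A') = card A'" using card_image inj_on_subset[OF injS4 A'S] by blast
      then show ?thesis using imA cAu by simp
    qed
    have dist4: "distinct [\<beta>1,\<beta>2,\<gamma>1,\<gamma>2]" using nbA(2) nbB(2) \<beta>\<gamma> by auto
    have finH: "xiso X H F"
      if H: "wf_graph H" "{a,b} \<in> edges H" "nocommon H a b" "contract H a b = contract C a b"
        "lab H ` X \<subseteq> verts H" "labels X H a = {}"
        and sp: "nbrs H a - {b} = A' \<or> nbrs H a - {b} = ?S4 - A'" for H
    proof -
      have \<psi>H: "isom X (contract H a b) (contract F u v) \<psi>" using \<psi> H(4) by simp
      have M: "(\<psi> ` (nbrs H a - {b}) = nbrs F u - {v} \<and> labels X H a = labels X F u) \<or>
               (\<psi> ` (nbrs H a - {b}) = nbrs F v - {u} \<and> labels X H a = labels X F v)"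
        using sp
      proof
        assume h: "nbrs H a - {b} = A'"
        have "\<psi> ` (nbrs H a - {b}) = nbrs F u - {v}" unfolding h by (rule imA)
        moreover have "labels X H a = labels X F u" using H(6) lu(1) by simp
        ultimately show ?thesis by (rule disjI1[OF conjI])
      next
        assume h: "nbrs H a - {b} = ?S4 - A'"
        have "\<psi> ` (nbrs H a - {b}) = nbrs F v - {u}" unfolding h by (rule imB)
        moreover have "labels X H a = labels X F v" using H(6) lu(2) by simp
        ultimately show ?thesis by (rule disjI2[OF conjI])
      qed
      show ?thesis using uncontract_xiso_either[OF H(1) wF H(2) uv(2) H(3) ncF \<psi>H \<psi>a H(5) M] .
    qed
    have hC: "xiso X C F" if "nbrs C a - {b} = A' \<or> nbrs C a - {b} = ?S4 - A'"
      using finH[OF wC ab ncC refl lC da(2) that] .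
    have hN1: "xiso X N1 F" if "nbrs N1 a - {b} = A' \<or> nbrs N1 a - {b} = ?S4 - A'"
    proof -
      have "nocommon N1 a b" "contract N1 a b = contract C a b" "{a,b} \<in> edges N1"
        unfolding N1_def using I1.N_nocommon I1.N_contract I1.N_ab by auto
      moreover have "labels X N1 a = {}" using da(2) unfolding N1_def by (simp add: I1.N_labels)
      ultimately show ?thesis using finH[OF wN1 _ _ _ lvN1 _ that] by blast
    qed
    have nbN2: "nbrs N2 a = {b,\<beta>1,\<gamma>2}" using I2.N_nbrs_a nbC nbA(2) e\<beta>(4) unfolding N2_def by auto
    have hN2: "xiso X N2 F" if "nbrs N2 a - {b} = A' \<or> nbrs N2 a - {b} = ?S4 - A'"
    proof -
      have "nocommon N2 a b" "contract N2 a b = contract C a b" "{a,b} \<in> edges N2"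
        unfolding N2_def using I2.N_nocommon I2.N_contract I2.N_ab by auto
      moreover have "labels X N2 a = {}" using da(2) unfolding N2_def by (simp add: I2.N_labels)
      ultimately show ?thesis using finH[OF wN2 _ _ _ lvN2 _ that] by blast
    qed
    have sC: "nbrs C a - {b} = {\<beta>1,\<beta>2}" using nbA(1) .
    have sN1: "nbrs N1 a - {b} = {\<beta>1,\<gamma>1}" using nbN1 e\<beta>(3) \<gamma>b by auto
    have sN2: "nbrs N2 a - {b} = {\<beta>1,\<gamma>2}" using nbN2 e\<beta>(3) \<gamma>b by auto
    have cases6: "A' = {\<beta>1,\<beta>2} \<or> A' = {\<gamma>1,\<gamma>2} \<or> A' = {\<beta>1,\<gamma>1} \<or> A' = {\<beta>2,\<gamma>2} \<or> A' = {\<beta>1,\<gamma>2} \<or> A' = {\<beta>2,\<gamma>1}"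
      using four_subsets[OF dist4 A'S cA'] .
    have xC: "xiso X C F \<or> xiso X N1 F \<or> xiso X N2 F"
    proof -
      have c1: "?S4 - {\<gamma>1,\<gamma>2} = {\<beta>1,\<beta>2}" "?S4 - {\<beta>2,\<gamma>2} = {\<beta>1,\<gamma>1}" "?S4 - {\<beta>2,\<gamma>1} = {\<beta>1,\<gamma>2}"
        using dist4 by auto
      from cases6 show ?thesis
        using hC hN1 hN2 sC sN1 sN2 c1 by metis
    qed
    have ie: "internal_edge F u v"
    proof -
      have "u \<notin> leaves F" "v \<notin> leaves F" using du by (auto simp: leaves_def)
      then show ?thesis using uv by (simp add: internal_edge_def)
    qed
    show ?thesis using xC ie G1(2) uv(3) by blast
  qed
  have allC: "\<forall>F. covers X w F \<longrightarrow> xiso X F C \<or> xiso X F N1 \<or> xiso X F N2"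
  proof (intro allI impI)
    fix F assume "covers X w F"
    then have "xiso X C F \<or> xiso X N1 F \<or> xiso X N2 F" using cls by blast
    then show "xiso X F C \<or> xiso X F N1 \<or> xiso X F N2" using xiso_sym lC lvN1 lvN2 by blast
  qed
  have allI': "\<forall>F. covers X w F \<longrightarrow> in_CX X F \<and> (\<exists>u v. internal_edge F u v \<and> xiso X w (contract F u v))"
  proof (intro allI impI conjI)
    fix F assume cov: "covers X w F"
    then have F: "is_xforest X F" by (simp add: covers_def)
    have "xiso X C F \<or> xiso X N1 F \<or> xiso X N2 F" using cls[OF cov] by blast
    then show "in_CX X F" using inCX_via_iso[OF _ _ F] C N1C N2C by blast
    show "\<exists>u v. internal_edge F u v \<and> xiso X w (contract F u v)" using cls[OF cov] by blast
  qed
  have nni: "\<forall>G. covers X w G \<and> \<not> xiso X G C \<longrightarrow> is_nni X C a b G"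
  proof (intro allI impI)
    fix G assume h: "covers X w G \<and> \<not> xiso X G C"
    then have "xiso X G N1 \<or> xiso X G N2" using allC by blast
    then show "is_nni X C a b G"
    proof
      assume "xiso X G N1"
      then show ?thesis unfolding is_nni_def N1_def using ie e\<beta>(2,4) e\<gamma>(1,3) by blast
    next
      assume "xiso X G N2"
      then show ?thesis unfolding is_nni_def N2_def using ie e\<beta>(2,4) e\<gamma>(2,4) by blast
    qed
  qed
  show ?thesis using covC covN1 covN2 ni1 ni2 ni3 allC allI' nni by blast
qed

lemma class_eq:
  assumes "lab F ` X \<subseteq> verts F" "xiso X F H"
  shows "{(F,G). xiso X F G} `` {F} = {(F,G). xiso X F G} `` {H}"
proof -
  have "xiso X H F" using xiso_sym assms by blast
  then show ?thesis using assms(2) xiso_trans by blast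
qed

lemma class_neq:
  assumes "\<not> xiso X H1 H2"
  shows "{(F,G). xiso X F G} `` {H1} \<noteq> {(F,G). xiso X F G} `` {H2}"
proof
  assume "{(F,G). xiso X F G} `` {H1} = {(F,G). xiso X F G} `` {H2}"
  moreover have "H2 \<in> {(F,G). xiso X F G} `` {H2}" using xiso_refl by blast
  ultimately have "xiso X H1 H2" by blast
  then show False using assms by simp
qed

lemma covers_lab: "covers X w F \<Longrightarrow> lab F ` X \<subseteq> verts F"
  by (simp add: covers_def xforest_lab)

theorem mainTheorem4:
  fixes X :: "'x set" and C w :: "'x xgraph"
  assumes "finite X" and "card X \<ge> 3"
    and "in_CX X C"
    and "is_xforest X w"
    and "covers X w C"
  shows "(card (cover_classes X w) = 3 \<longleftrightarrow>
            (\<exists>u v. internal_edge C u v \<and> xiso X w (contract C u v)))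
       \<and> (\<forall>u v. internal_edge C u v \<and> xiso X w (contract C u v) \<longrightarrow>
            (\<forall>F. covers X w F \<longrightarrow> in_CX X F) \<and>
            (\<forall>G. covers X w G \<and> \<not> xiso X G C \<longrightarrow> is_nni X C u v G) \<and>
            (\<forall>F G. covers X w F \<and> covers X w G \<and> \<not> xiso X F G \<longrightarrow>
               (\<exists>u' v'. internal_edge F u' v' \<and> xiso X w (contract F u' v') \<and>
                        is_nni X F u' v' G)))
       \<and> ((\<forall>F. covers X w F \<longrightarrow> xiso X F C) \<longleftrightarrow>
            (\<exists>u v. leaf_edge C u v \<and> xiso X w (contract C u v)))"
proof -
  note fin = assms(1) and X3 = assms(2) and C = assms(3) and w = assms(4) and covC = assms(5)
  let ?R = "{(F,G). xiso X F G}"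
  have T: "is_xtree X C" using C by (rule inCX_xtree)
  have wC: "wf_graph C" using T by (rule xtree_wf)
  have lC: "lab C ` X \<subseteq> verts C" using T by (rule xtree_lab)
  obtain G0 where G0: "one_step X C G0" "xiso X w G0" using covC by (auto simp: covers_def)
  obtain a b where ab: "a \<noteq> b" "{a,b} \<in> edges C" "G0 = contract C a b"
    using inCX_step[OF C X3 G0(1)] by blast
  have iso0: "xiso X w (contract C a b)" using G0(2) ab(3) by simp
  have leafcase: "\<forall>F. covers X w F \<longrightarrow> xiso X F C"
    if "leaf_edge C u v" "xiso X w (contract C u v)" for u v
  proof -
    have e: "{u,v} \<in> edges C" and l: "deg C u = 1 \<or> deg C v = 1"
      using that(1) by (auto simp: leaf_edge_def leaves_def)
    show ?thesis using core_leaf[OF C fin X3 e l that(2) w] by blast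
  qed
  have classes_leaf: "cover_classes X w = {?R `` {C}}"
    if "\<forall>F. covers X w F \<longrightarrow> xiso X F C"
  proof -
    have "cover_classes X w = (\<Union>F\<in>{F. covers X w F}. {?R `` {F}})"
      by (simp add: cover_classes_def quotient_def)
    also have "\<dots> = {?R `` {C}}"
    proof
      show "(\<Union>F\<in>{F. covers X w F}. {?R `` {F}}) \<subseteq> {?R `` {C}}"
      proof
        fix K assume "K \<in> (\<Union>F\<in>{F. covers X w F}. {?R `` {F}})"
        then obtain F where F: "covers X w F" "K = ?R `` {F}" by blast
        have "?R `` {F} = ?R `` {C}" using class_eq[OF covers_lab[OF F(1)]] that F(1) by blast
        then show "K \<in> {?R `` {C}}" using F(2) by simp
      qed
      show "{?R `` {C}} \<subseteq> (\<Union>F\<in>{F. covers X w F}. {?R `` {F}})" using covC by blast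
    qed
    finally show ?thesis .
  qed
  have classes_int: "card (cover_classes X w) = 3" if hi: "internal_edge C u v" "xiso X w (contract C u v)" for u v
  proof -
    obtain N1 N2 where N: "covers X w N1" "covers X w N2"
      "\<not> xiso X N1 C" "\<not> xiso X N2 C" "\<not> xiso X N2 N1"
      "\<forall>F. covers X w F \<longrightarrow> xiso X F C \<or> xiso X F N1 \<or> xiso X F N2"
      using core_int[OF C fin X3 hi w] by blast
    have "cover_classes X w = (\<Union>F\<in>{F. covers X w F}. {?R `` {F}})"
      by (simp add: cover_classes_def quotient_def)
    also have "\<dots> = {?R `` {C}, ?R `` {N1}, ?R `` {N2}}"
    proof
      show "(\<Union>F\<in>{F. covers X w F}. {?R `` {F}}) \<subseteq> {?R `` {C}, ?R `` {N1}, ?R `` {N2}}"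
      proof
        fix K assume "K \<in> (\<Union>F\<in>{F. covers X w F}. {?R `` {F}})"
        then obtain F where F: "covers X w F" "K = ?R `` {F}" by blast
        have lF: "lab F ` X \<subseteq> verts F" using covers_lab[OF F(1)] .
        from N(6) F(1) consider "xiso X F C" | "xiso X F N1" | "xiso X F N2" by blast
        then show "K \<in> {?R `` {C}, ?R `` {N1}, ?R `` {N2}}"
        proof cases
          case 1 then show ?thesis using class_eq[OF lF] F(2) by blast
        next
          case 2 then show ?thesis using class_eq[OF lF] F(2) by blast
        next
          case 3 then show ?thesis using class_eq[OF lF] F(2) by blast
        qed
      qed
      show "{?R `` {C}, ?R `` {N1}, ?R `` {N2}} \<subseteq> (\<Union>F\<in>{F. covers X w F}. {?R `` {F}})"
        using covC N(1,2) by blast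
    qed
    finally have eq: "cover_classes X w = {?R `` {C}, ?R `` {N1}, ?R `` {N2}}" .
    have d1: "?R `` {C} \<noteq> ?R `` {N1}" using class_neq N(3) xiso_sym covers_lab[OF N(1)] by metis
    have d2: "?R `` {C} \<noteq> ?R `` {N2}" using class_neq N(4) xiso_sym covers_lab[OF N(2)] by metis
    have d3: "?R `` {N1} \<noteq> ?R `` {N2}" using class_neq N(5) xiso_sym covers_lab[OF N(2)] by metis
    show ?thesis unfolding eq using d1 d2 d3 by simp
  qed
  have dich: "internal_edge C a b \<or> leaf_edge C a b"
    using ab by (auto simp: internal_edge_def leaf_edge_def)
  have P1: "card (cover_classes X w) = 3 \<longleftrightarrow> (\<exists>u v. internal_edge C u v \<and> xiso X w (contract C u v))"
  proof
    assume c3: "card (cover_classes X w) = 3"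
    show "\<exists>u v. internal_edge C u v \<and> xiso X w (contract C u v)"
    proof (rule ccontr)
      assume "\<not> (\<exists>u v. internal_edge C u v \<and> xiso X w (contract C u v))"
      then have "leaf_edge C a b" using dich iso0 by blast
      then have "cover_classes X w = {?R `` {C}}" using classes_leaf leafcase iso0 by blast
      then show False using c3 by simp
    qed
  next
    assume "\<exists>u v. internal_edge C u v \<and> xiso X w (contract C u v)"
    then show "card (cover_classes X w) = 3" using classes_int by blast
  qed
  have P2: "\<forall>u v. internal_edge C u v \<and> xiso X w (contract C u v) \<longrightarrow>
            (\<forall>F. covers X w F \<longrightarrow> in_CX X F) \<and>
            (\<forall>G. covers X w G \<and> \<not> xiso X G C \<longrightarrow> is_nni X C u v G) \<and>
            (\<forall>F G. covers X w F \<and> covers X w G \<and> \<not> xiso X F G \<longrightarrow>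
               (\<exists>u' v'. internal_edge F u' v' \<and> xiso X w (contract F u' v') \<and>
                        is_nni X F u' v' G))"
  proof (intro allI impI)
    fix u v assume h: "internal_edge C u v \<and> xiso X w (contract C u v)"
    have CI: "(\<forall>F. covers X w F \<longrightarrow> in_CX X F \<and> (\<exists>u v. internal_edge F u v \<and> xiso X w (contract F u v))) \<and>
       (\<forall>G. covers X w G \<and> \<not> xiso X G C \<longrightarrow> is_nni X C u v G)"
      using core_int[OF C fin X3 conjunct1[OF h] conjunct2[OF h] w] by blast
    have third: "\<exists>u' v'. internal_edge F u' v' \<and> xiso X w (contract F u' v') \<and> is_nni X F u' v' G"
      if FG: "covers X w F \<and> covers X w G \<and> \<not> xiso X F G" for F G
    proof -
      have FC: "in_CX X F" and ex: "\<exists>u v. internal_edge F u v \<and> xiso X w (contract F u v)"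
        using CI FG by blast+
      obtain u' v' where uv': "internal_edge F u' v'" "xiso X w (contract F u' v')" using ex by blast
      have "\<forall>G. covers X w G \<and> \<not> xiso X G F \<longrightarrow> is_nni X F u' v' G"
        using core_int[OF FC fin X3 uv' w] by blast
      moreover have "\<not> xiso X G F" using FG xiso_sym covers_lab by metis
      ultimately show ?thesis using uv' FG by blast
    qed
    show "(\<forall>F. covers X w F \<longrightarrow> in_CX X F) \<and>
            (\<forall>G. covers X w G \<and> \<not> xiso X G C \<longrightarrow> is_nni X C u v G) \<and>
            (\<forall>F G. covers X w F \<and> covers X w G \<and> \<not> xiso X F G \<longrightarrow>
               (\<exists>u' v'. internal_edge F u' v' \<and> xiso X w (contract F u' v') \<and>
                        is_nni X F u' v' G))"
      using CI third by blast
  qed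
  have P3: "(\<forall>F. covers X w F \<longrightarrow> xiso X F C) \<longleftrightarrow> (\<exists>u v. leaf_edge C u v \<and> xiso X w (contract C u v))"
  proof
    assume all: "\<forall>F. covers X w F \<longrightarrow> xiso X F C"
    show "\<exists>u v. leaf_edge C u v \<and> xiso X w (contract C u v)"
    proof (rule ccontr)
      assume "\<not> (\<exists>u v. leaf_edge C u v \<and> xiso X w (contract C u v))"
      then have ie: "internal_edge C a b" using dich iso0 by blast
      obtain N1 where "covers X w N1" "\<not> xiso X N1 C"
        using core_int[OF C fin X3 ie iso0 w] by blast
      then show False using all by blast
    qed
  next
    assume "\<exists>u v. leaf_edge C u v \<and> xiso X w (contract C u v)"
    then show "\<forall>F. covers X w F \<longrightarrow> xiso X F C" using leafcase by blast
  qed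
  show ?thesis using P1 P2 P3 by blast
qed

end
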